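(* Let $A \in \mathbb{C}^{m \times p}$, $y \in \mathbb{C}^{m}$, patch-extraction operators $P_1,\dots,P_N \in \{0,1\}^{n \times p}$, an integer $K\ge1$, and $\nu,\eta,C>0$. Define $$h(W,B,\Gamma,x) = \nu\|Ax-y\|_2^2 + \chi(x) + \sum_{k=1}^K \varphi(W_k) + \sum_{j=1}^N\left\{\|W_{\Gamma_j}P_jx - b_j\|_2^2 + \eta^2\|b_j\|_0\right\},$$ with $W\in\mathbb{C}^{Kn\times n}$ the stack of $W_1,\dots,W_K\in\mathbb{C}^{n\times n}$, $B=[b_1|\cdots|b_N]$, $\Gamma\in\{1,\dots,K\}^{1\times N}$, $\varphi(W_k)=0$ if $W_k^HW_k=I$ and $+\infty$ otherwise, $\chi(x)=0$ if $\|x\|_2\le C$ and $+\infty$ otherwise. For each initialization $(W^0,B^0,\Gamma^0,x^0)$, the iterate sequence of Algorithm A2 (described in the context) converges to an equivalence class (all members achieving the same objective value) of accumulation points $(W,B,\Gamma,x)$ that are partial minimizers satisfying: $x\in\arg\min_{\tilde x}h(W,B,\Gamma,\tilde x)$, $W\in\arg\min_{\tilde W}h(\tilde W,B,\Gamma,x)$, $(B,\Gamma)\in\arg\min_{\tilde B,\tilde\Gamma}h(W,\tilde B,\tilde\Gamma,x)$, and $h(W,B+\Delta B,\Gamma,x+\Delta x)\ge h(W,B,\Gamma,x)$ for all $\Delta x\in\mathbb{C}^p$ and all $\Delta B$ with $\|\Delta B\|_\infty<\eta/2$.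
   Context: $\|b\|_0$ counts nonzeros; $\|H\|_\infty=\max_{i,j}|H_{ij}|$. $H_\eta$ is entrywise hard thresholding: $(H_\eta(\alpha))_i=0$ if $|\alpha_i|<\eta$, $=\alpha_i$ if $|\alpha_i|\ge\eta$. Algorithm A2: for $t=1,2,\dots$, with exact computations: (1) for each $k$, with $Q_k,R_k$ the matrices with columns $P_jx^{t-1}$, $b_j^{t-1}$ for $j$ with $\Gamma_j^{t-1}=k$, and full SVD $Q_kR_k^H=U\Sigma V^H$, set $W_k^t=VU^H$; (2) for each $j$, with $\gamma_k=\|W_k^tP_jx^{t-1}-H_\eta(W_k^tP_jx^{t-1})\|_2^2+\eta^2\|H_\eta(W_k^tP_jx^{t-1})\|_0$, set $\Gamma_j^t$ the smallest minimizing $k$ and $b_j^t=H_\eta(W^t_{\Gamma_j^t}P_jx^{t-1})$; (3) $x^t$ is a global minimizer of $\nu\|Ax-y\|_2^2+\sum_j\|W^t_{\Gamma^t_j}P_jx-b_j^t\|_2^2$ subject to $\|x\|_2\le C$. *)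

theory Defs
  imports "HOL-Analysis.Analysis"
begin

definition cadj :: "complex^'a^'b \<Rightarrow> complex^'b^'a" where
  "cadj M = (\<chi> i j. cnj (M $ j $ i))"

definition unitary_mat :: "complex^'n^'n \<Rightarrow> bool" where
  "unitary_mat W \<longleftrightarrow> cadj W ** W = mat 1"

definition outer :: "complex^'a \<Rightarrow> complex^'b \<Rightarrow> complex^'b^'a" where
  "outer u v = (\<chi> i j. u $ i * cnj (v $ j))"

definition is_full_svd :: "complex^'n^'n \<Rightarrow> complex^'n^'n \<Rightarrow> complex^'n^'n \<Rightarrow> complex^'n^'n \<Rightarrow> bool" where
  "is_full_svd M U S V \<longleftrightarrow> unitary_mat U \<and> unitary_mat V
     \<and> (\<forall>i j. i \<noteq> j \<longrightarrow> S $ i $ j = 0)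
     \<and> (\<forall>i. S $ i $ i \<in> \<real> \<and> 0 \<le> Re (S $ i $ i))
     \<and> M = U ** S ** cadj V"

definition l0 :: "complex^'n \<Rightarrow> nat" where
  "l0 b = card {i. b $ i \<noteq> 0}"

definition hard_thr :: "real \<Rightarrow> complex^'n \<Rightarrow> complex^'n" where
  "hard_thr \<eta> a = (\<chi> i. if norm (a $ i) < \<eta> then 0 else a $ i)"

text \<open>Transforms indexed by a finite linear order type 'k (playing {1..K}),
  patches by a finite type 'j (playing {1..N}).\<close>
definition hobj ::
  "complex^'p^'m \<Rightarrow> complex^'m \<Rightarrow> ('j::finite \<Rightarrow> complex^'p^'n) \<Rightarrow> real \<Rightarrow> real \<Rightarrow> real
   \<Rightarrow> ('k \<Rightarrow> complex^'n^'n) \<Rightarrow> ('j \<Rightarrow> complex^'n) \<Rightarrow> ('j \<Rightarrow> 'k) \<Rightarrow> complex^'p \<Rightarrow> ereal" where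
  "hobj A y P \<nu> \<eta> C W B \<Gamma> x =
     (if (\<forall>k. unitary_mat (W k)) \<and> norm x \<le> C
      then ereal (\<nu> * (norm (A *v x - y))\<^sup>2
                 + (\<Sum>j\<in>UNIV. (norm (W (\<Gamma> j) *v (P j *v x) - B j))\<^sup>2 + \<eta>\<^sup>2 * real (l0 (B j))))
      else \<infinity>)"

definition sc_cost :: "real \<Rightarrow> complex^'n^'n \<Rightarrow> complex^'n \<Rightarrow> real" where
  "sc_cost \<eta> Wk z = (norm (Wk *v z - hard_thr \<eta> (Wk *v z)))\<^sup>2 + \<eta>\<^sup>2 * real (l0 (hard_thr \<eta> (Wk *v z)))"

text \<open>One iteration of A2, from (B', Gamma', x') = iterate t-1 to (W, B, Gamma, x) = iterate t.\<close>
definition A2_step ::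
  "complex^'p^'m \<Rightarrow> complex^'m \<Rightarrow> ('j::finite \<Rightarrow> complex^'p^'n) \<Rightarrow> real \<Rightarrow> real \<Rightarrow> real
   \<Rightarrow> ('j \<Rightarrow> complex^'n) \<Rightarrow> ('j \<Rightarrow> 'k::{finite,linorder}) \<Rightarrow> complex^'p
   \<Rightarrow> ('k \<Rightarrow> complex^'n^'n) \<Rightarrow> ('j \<Rightarrow> complex^'n) \<Rightarrow> ('j \<Rightarrow> 'k) \<Rightarrow> complex^'p \<Rightarrow> bool" where
  "A2_step A y P \<nu> \<eta> C B' \<Gamma>' x' W B \<Gamma> x \<longleftrightarrow>
     \<comment> \<open>(1) transform update via full SVD of Q_k R_k^H\<close>
     (\<forall>k. \<exists>U S V. is_full_svd (\<Sum>j\<in>{j. \<Gamma>' j = k}. outer (P j *v x') (B' j)) U S V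
                  \<and> W k = V ** cadj U)
     \<comment> \<open>(2) sparse coding and clustering, smallest minimizing index\<close>
     \<and> (\<forall>j. (\<forall>k. sc_cost \<eta> (W (\<Gamma> j)) (P j *v x') \<le> sc_cost \<eta> (W k) (P j *v x'))
            \<and> (\<forall>k. k < \<Gamma> j \<longrightarrow> sc_cost \<eta> (W (\<Gamma> j)) (P j *v x') < sc_cost \<eta> (W k) (P j *v x'))
            \<and> B j = hard_thr \<eta> (W (\<Gamma> j) *v (P j *v x')))
     \<comment> \<open>(3) image update: global minimizer over the ball of radius C\<close>
     \<and> norm x \<le> C
     \<and> (\<forall>z. norm z \<le> C \<longrightarrow>
           \<nu> * (norm (A *v x - y))\<^sup>2 + (\<Sum>j\<in>UNIV. (norm (W (\<Gamma> j) *v (P j *v x) - B j))\<^sup>2)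
         \<le> \<nu> * (norm (A *v z - y))\<^sup>2 + (\<Sum>j\<in>UNIV. (norm (W (\<Gamma> j) *v (P j *v z) - B j))\<^sup>2))"

text \<open>Iterates indexed by t = 0,1,2,...; t = 0 is the (arbitrary) initialization.\<close>
definition A2_iterates where
  "A2_iterates A y P \<nu> \<eta> C Wt Bt \<Gamma>t xt \<longleftrightarrow>
     (\<forall>t. A2_step A y P \<nu> \<eta> C (Bt t) (\<Gamma>t t) (xt t)
                   (Wt (Suc t)) (Bt (Suc t)) (\<Gamma>t (Suc t)) (xt (Suc t)))"

section \<open>Accumulation points (Gamma carries the discrete topology)\<close>

definition is_accum_point ::
  "(nat \<Rightarrow> 'k \<Rightarrow> complex^'n^'n) \<Rightarrow> (nat \<Rightarrow> 'j \<Rightarrow> complex^'n) \<Rightarrow> (nat \<Rightarrow> 'j \<Rightarrow> 'k) \<Rightarrow> (nat \<Rightarrow> complex^'p)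
   \<Rightarrow> ('k \<Rightarrow> complex^'n^'n) \<Rightarrow> ('j \<Rightarrow> complex^'n) \<Rightarrow> ('j \<Rightarrow> 'k) \<Rightarrow> complex^'p \<Rightarrow> bool" where
  "is_accum_point Wt Bt \<Gamma>t xt W B \<Gamma> x \<longleftrightarrow>
     (\<exists>r. strict_mono r
        \<and> (\<forall>k. (\<lambda>i. Wt (r i) k) \<longlonglongrightarrow> W k)
        \<and> (\<forall>j. (\<lambda>i. Bt (r i) j) \<longlonglongrightarrow> B j)
        \<and> (\<forall>\<^sub>F i in sequentially. \<Gamma>t (r i) = \<Gamma>)
        \<and> (\<lambda>i. xt (r i)) \<longlonglongrightarrow> x)"

definition iter_close :: "real \<Rightarrow> ('k \<Rightarrow> complex^'n^'n) \<Rightarrow> ('j \<Rightarrow> complex^'n) \<Rightarrow> ('j \<Rightarrow> 'k) \<Rightarrow> complex^'p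
   \<Rightarrow> ('k \<Rightarrow> complex^'n^'n) \<Rightarrow> ('j \<Rightarrow> complex^'n) \<Rightarrow> ('j \<Rightarrow> 'k) \<Rightarrow> complex^'p \<Rightarrow> bool" where
  "iter_close \<epsilon> W B \<Gamma> x W' B' \<Gamma>' x' \<longleftrightarrow>
     (\<forall>k. dist (W k) (W' k) < \<epsilon>) \<and> (\<forall>j. dist (B j) (B' j) < \<epsilon>) \<and> \<Gamma> = \<Gamma>' \<and> dist x x' < \<epsilon>"

end

theory Submission
  imports Defs
begin

lemma norm2_vec: "(norm (v::'a::real_normed_vector^'n))\<^sup>2 = (\<Sum>i\<in>UNIV. (norm (v$i))\<^sup>2)"
  by (simp add: norm_vec_def L2_set_def sum_nonneg)

lemma l0_sum: "real (l0 b) = (\<Sum>i\<in>UNIV. if b$i \<noteq> 0 then 1 else 0)"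
proof -
  have "(\<Sum>i\<in>UNIV. if b$i \<noteq> 0 then 1 else (0::real)) = (\<Sum>i\<in>{i\<in>UNIV. b$i \<noteq> 0}. 1)"
    by (subst sum.inter_filter) auto
  then show ?thesis unfolding l0_def by simp
qed

definition cinner :: "complex^'n \<Rightarrow> complex^'n \<Rightarrow> complex" where
  "cinner u v = (\<Sum>i\<in>UNIV. u$i * cnj (v$i))"

lemma inner_cinner: "inner u v = Re (cinner u v)"
  by (simp add: inner_vec_def cinner_def inner_complex_def)

lemma norm2_cinner: "(norm u)\<^sup>2 = Re (cinner u u)"
  by (simp add: power2_norm_eq_inner inner_cinner)

lemma cadj_cadj[simp]: "cadj (cadj M) = M"
  by (simp add: cadj_def vec_eq_iff)

lemma cadj_mult: "cadj (A ** B) = cadj B ** cadj A"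
  by (simp add: cadj_def vec_eq_iff matrix_matrix_mult_def mult.commute)

lemma cinner_adj: "cinner (M *v u) v = cinner u (cadj M *v v)"
proof -
  have "cinner (M *v u) v = (\<Sum>i\<in>UNIV. \<Sum>k\<in>UNIV. M$i$k * u$k * cnj (v$i))"
    by (simp add: cinner_def matrix_vector_mult_def sum_distrib_right)
  also have "\<dots> = (\<Sum>k\<in>UNIV. \<Sum>i\<in>UNIV. M$i$k * u$k * cnj (v$i))"
    by (rule sum.swap)
  also have "\<dots> = cinner u (cadj M *v v)"
    by (simp add: cinner_def matrix_vector_mult_def cadj_def sum_distrib_left mult_ac)
  finally show ?thesis .
qed

lemma unitary_inv: "unitary_mat W \<Longrightarrow> cadj W *v (W *v u) = u"
  by (simp add: unitary_mat_def matrix_vector_mul_assoc)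

lemma unitary_norm: "unitary_mat W \<Longrightarrow> norm (W *v u) = norm u"
proof -
  assume "unitary_mat W"
  then have "(norm (W *v u))\<^sup>2 = (norm u)\<^sup>2"
    by (simp add: norm2_cinner cinner_adj unitary_inv)
  then show ?thesis by (simp add: power2_eq_iff_nonneg)
qed

lemma unitary_zero: "unitary_mat W \<Longrightarrow> W *v u = 0 \<Longrightarrow> u = 0"
  using unitary_norm by (metis norm_eq_zero)

lemma unitary_right: "unitary_mat W \<Longrightarrow> W ** cadj W = mat 1"
  unfolding unitary_mat_def using matrix_left_right_inverse by blast

lemma unitary_mult: "unitary_mat A \<Longrightarrow> unitary_mat B \<Longrightarrow> unitary_mat (A ** B)"
  unfolding unitary_mat_def cadj_mult
  by (metis matrix_mul_assoc matrix_mul_lid)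

lemma unitary_cadj: "unitary_mat A \<Longrightarrow> unitary_mat (cadj A)"
  unfolding unitary_mat_def[of "cadj A"] by (simp add: unitary_right)

lemma norm2_column: "(norm (\<chi> k. X$k$i))\<^sup>2 = Re ((cadj X ** X)$i$i)"
  by (simp add: norm2_cinner cinner_def cadj_def matrix_matrix_mult_def mult.commute)

lemma unitary_column: "unitary_mat X \<Longrightarrow> norm (\<chi> k. X$k$i) = 1"
proof -
  assume "unitary_mat X"
  then have "(norm (\<chi> k. X$k$i))\<^sup>2 = 1"
    by (simp add: norm2_column unitary_mat_def mat_def)
  then show ?thesis using norm_ge_zero by (smt (verit) power2_eq_1_iff)
qed

lemma unitary_entry: "unitary_mat X \<Longrightarrow> norm (X$k$i) \<le> 1"
  using Finite_Cartesian_Product.norm_nth_le[of "\<chi> k. X$k$i" k] unitary_column by fastforce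

lemma norm_le_l1_gen: "norm (x::'a::real_normed_vector^'n) \<le> (\<Sum>i\<in>UNIV. norm (x$i))"
  by (simp add: norm_vec_def L2_set_le_sum)

lemma unitary_bound: "unitary_mat X \<Longrightarrow> norm X \<le> real CARD('n) * real CARD('n)"
  for X :: "complex^'n^'n"
proof -
  assume u: "unitary_mat X"
  have "norm X \<le> (\<Sum>i\<in>UNIV. norm (X$i))" by (rule norm_le_l1_gen)
  also have "\<dots> \<le> (\<Sum>i\<in>(UNIV::'n set). real CARD('n))"
  proof (rule sum_mono)
    fix i
    have "norm (X$i) \<le> (\<Sum>k\<in>UNIV. norm (X$i$k))" by (rule norm_le_l1_gen)
    also have "\<dots> \<le> (\<Sum>k\<in>(UNIV::'n set). 1)" by (rule sum_mono) (use u unitary_entry in auto)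
    finally show "norm (X$i) \<le> real CARD('n)" by simp
  qed
  finally show ?thesis by simp
qed

lemma mv_scaleR: "(M::complex^'a^'b) *v (s *\<^sub>R d) = s *\<^sub>R (M *v d)"
  by (simp add: vec_eq_iff matrix_vector_mult_def scaleR_sum_right)

lemma norm_mv_bound: "norm ((M::complex^'a^'b) *v v) \<le> (\<Sum>i\<in>UNIV. \<Sum>k\<in>UNIV. norm (M$i$k)) * norm v"
proof -
  have "norm (M *v v) \<le> (\<Sum>i\<in>UNIV. norm ((M *v v)$i))" by (rule norm_le_l1_gen)
  also have "\<dots> \<le> (\<Sum>i\<in>UNIV. \<Sum>k\<in>UNIV. norm (M$i$k) * norm v)"
  proof (rule sum_mono)
    fix i
    have "norm ((M *v v)$i) \<le> (\<Sum>k\<in>UNIV. norm (M$i$k * v$k))"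
      unfolding matrix_vector_mult_def by (simp add: norm_sum)
    also have "\<dots> \<le> (\<Sum>k\<in>UNIV. norm (M$i$k) * norm v)"
      by (rule sum_mono) (simp add: norm_mult mult_left_mono Finite_Cartesian_Product.norm_nth_le)
    finally show "norm ((M *v v)$i) \<le> (\<Sum>k\<in>UNIV. norm (M$i$k) * norm v)" .
  qed
  finally show ?thesis by (simp add: sum_distrib_right)
qed

lemma norm2_add_scale: "(norm (a + s *\<^sub>R b))\<^sup>2 = (norm a)\<^sup>2 + 2 * s * inner a b + s\<^sup>2 * (norm b)\<^sup>2"
  for a b :: "'a::real_inner"
  unfolding power2_norm_eq_inner by (simp add: inner_add_left inner_add_right inner_commute power2_eq_square algebra_simps)

lemma norm2_diff: "(norm (a - b))\<^sup>2 = (norm a)\<^sup>2 + (norm b)\<^sup>2 - 2 * inner a b"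
  for a b :: "'a::real_inner"
  using dot_norm_neg[of a b] by simp


lemma trace_zero: "trace 0 = 0" by (simp add: trace_def)

lemma trace_sum: "finite A \<Longrightarrow> trace (W ** sum f A) = (\<Sum>j\<in>A. trace (W ** f j))"
  by (induction A rule: finite_induct) (simp_all add: matrix_add_ldistrib trace_zero, simp add: trace_def sum.distrib)

lemma cinner_trace: "cinner (W *v u) b = trace (W ** outer u b)"
  by (simp add: cinner_def cinner_def trace_def matrix_matrix_mult_def matrix_vector_mult_def
      outer_def sum_distrib_right sum_distrib_left mult_ac)

lemma inner_trace: "inner (W *v u) b = Re (trace (W ** outer u b))"
  by (simp add: inner_cinner cinner_trace)

lemma trace_diag: 
  assumes "\<forall>i j. i \<noteq> j \<longrightarrow> S $ i $ j = 0"
  shows "trace (G ** S) = (\<Sum>i\<in>UNIV. G$i$i * S$i$i)"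
proof -
  have "\<And>i. (\<Sum>k\<in>UNIV. G$i$k * S$k$i) = (\<Sum>k\<in>UNIV. if k = i then G$i$i * S$i$i else 0)"
    by (rule sum.cong) (use assms in auto)
  then show ?thesis by (simp add: trace_def matrix_matrix_mult_def)
qed

lemma trace_conj: "trace (X ** ((U ** S) ** cadj V)) = trace ((cadj V ** (X ** U)) ** S)"
proof -
  have "trace (X ** ((U ** S) ** cadj V)) = trace (((X ** U) ** S) ** cadj V)"
    by (simp add: matrix_mul_assoc)
  also have "\<dots> = trace (cadj V ** ((X ** U) ** S))" by (rule trace_mul_sym)
  also have "\<dots> = trace ((cadj V ** (X ** U)) ** S)" by (simp add: matrix_mul_assoc)
  finally show ?thesis .
qed

lemma svd_opt:
  assumes svd: "is_full_svd M U S V" and W': "unitary_mat W'"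
  shows "Re (trace (W' ** M)) \<le> Re (trace ((V ** cadj U) ** M))"
proof -
  have uU: "unitary_mat U" and uV: "unitary_mat V" and diag: "\<forall>i j. i \<noteq> j \<longrightarrow> S $ i $ j = 0"
    and real: "\<forall>i. S $ i $ i \<in> \<real> \<and> 0 \<le> Re (S $ i $ i)" and M: "M = U ** S ** cadj V"
    using svd unfolding is_full_svd_def by auto
  have ReS: "Re (G$i$i * S$i$i) = Re (G$i$i) * Re (S$i$i)" for G :: "complex^'a^'a" and i
    using real by (auto simp: complex_is_Real_iff)
  have ImS: "Im (S$i$i) = 0" for i using real by (auto simp: complex_is_Real_iff)
  define G where "G = cadj V ** (W' ** U)"
  have uWU: "unitary_mat (W' ** U)" using W' uU by (rule unitary_mult)
  have Gle: "Re (G$i$i) \<le> 1" for i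
  proof -
    have "Re (G$i$i) = inner (\<chi> k. (W' ** U)$k$i) (\<chi> k. V$k$i)"
      by (simp add: G_def inner_cinner cinner_def matrix_matrix_mult_def cadj_def mult.commute)
    also have "\<dots> \<le> norm (\<chi> k. (W' ** U)$k$i) * norm (\<chi> k. V$k$i)" by (rule norm_cauchy_schwarz)
    also have "\<dots> = 1" using unitary_column[OF uWU] unitary_column[OF uV] by simp
    finally show ?thesis .
  qed
  have "Re (trace (W' ** M)) = (\<Sum>i\<in>UNIV. Re (G$i$i) * Re (S$i$i))"
    unfolding M trace_conj trace_diag[OF diag] G_def by (simp add: ImS)
  also have "\<dots> \<le> (\<Sum>i\<in>UNIV. Re (S$i$i))"
  proof (rule sum_mono)
    fix i
    show "Re (G$i$i) * Re (S$i$i) \<le> Re (S$i$i)"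
      using mult_right_mono[OF Gle[of i], of "Re (S$i$i)"] real by simp
  qed
  also have "\<dots> = Re (trace ((V ** cadj U) ** M))"
  proof -
    have "cadj V ** ((V ** cadj U) ** U) = (cadj V ** V) ** (cadj U ** U)"
      by (simp only: matrix_mul_assoc)
    also have "\<dots> = mat 1" using uU uV unfolding unitary_mat_def by (simp add: matrix_mul_lid)
    finally have "cadj V ** ((V ** cadj U) ** U) = mat 1" .
    then show ?thesis unfolding M trace_conj trace_diag[OF diag] by (simp add: mat_def)
  qed
  finally show ?thesis .
qed

lemma svd_unitary: "is_full_svd M U S V \<Longrightarrow> unitary_mat (V ** cadj U)"
  unfolding is_full_svd_def by (auto intro: unitary_mult unitary_cadj)


lemma fit_expand:
  fixes P :: "'j::finite \<Rightarrow> complex^'p^'n" and X :: "'k::finite \<Rightarrow> complex^'n^'n"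
  assumes "\<forall>k. unitary_mat (X k)"
  shows "(\<Sum>j\<in>UNIV. (norm (X (\<Gamma> j) *v (P j *v x) - B j))\<^sup>2)
     = (\<Sum>j\<in>UNIV. (norm (P j *v x))\<^sup>2 + (norm (B j))\<^sup>2)
       - 2 * (\<Sum>k\<in>UNIV. Re (trace (X k ** (\<Sum>j\<in>{j. \<Gamma> j = k}. outer (P j *v x) (B j)))))"
proof -
  have "(\<Sum>j\<in>UNIV. (norm (X (\<Gamma> j) *v (P j *v x) - B j))\<^sup>2)
      = (\<Sum>j\<in>UNIV. (norm (P j *v x))\<^sup>2 + (norm (B j))\<^sup>2 - 2 * Re (trace (X (\<Gamma> j) ** outer (P j *v x) (B j))))"
    by (rule sum.cong) (simp_all add: norm2_diff unitary_norm assms inner_trace)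
  also have "\<dots> = (\<Sum>j\<in>UNIV. (norm (P j *v x))\<^sup>2 + (norm (B j))\<^sup>2) - 2 * (\<Sum>j\<in>UNIV. Re (trace (X (\<Gamma> j) ** outer (P j *v x) (B j))))"
    by (simp add: sum_subtractf sum_distrib_left)
  also have "(\<Sum>j\<in>UNIV. Re (trace (X (\<Gamma> j) ** outer (P j *v x) (B j))))
      = (\<Sum>k\<in>UNIV. \<Sum>j\<in>{j\<in>UNIV. \<Gamma> j = k}. Re (trace (X (\<Gamma> j) ** outer (P j *v x) (B j))))"
    by (rule sum.group[symmetric]) auto
  also have "\<dots> = (\<Sum>k\<in>UNIV. \<Sum>j\<in>{j. \<Gamma> j = k}. Re (trace (X k ** outer (P j *v x) (B j))))"
    by (rule sum.cong) auto
  also have "\<dots> = (\<Sum>k\<in>UNIV. Re (trace (X k ** (\<Sum>j\<in>{j. \<Gamma> j = k}. outer (P j *v x) (B j)))))"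
    by (simp add: trace_sum)
  finally show ?thesis .
qed

lemma wstep_opt:
  fixes P :: "'j::finite \<Rightarrow> complex^'p^'n" and W W' :: "'k::finite \<Rightarrow> complex^'n^'n"
  assumes svd: "\<forall>k. \<exists>U S V. is_full_svd (\<Sum>j\<in>{j. \<Gamma> j = k}. outer (P j *v x) (B j)) U S V \<and> W k = V ** cadj U"
    and W': "\<forall>k. unitary_mat (W' k)"
  shows "\<forall>k. unitary_mat (W k)"
    and "(\<Sum>j\<in>UNIV. (norm (W (\<Gamma> j) *v (P j *v x) - B j))\<^sup>2) \<le> (\<Sum>j\<in>UNIV. (norm (W' (\<Gamma> j) *v (P j *v x) - B j))\<^sup>2)"
proof -
  show uW: "\<forall>k. unitary_mat (W k)"
  proof
    fix k
    obtain U S V where "is_full_svd (\<Sum>j\<in>{j. \<Gamma> j = k}. outer (P j *v x) (B j)) U S V" "W k = V ** cadj U"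
      using svd by blast
    then show "unitary_mat (W k)" using svd_unitary by simp
  qed
  have "Re (trace (W' k ** (\<Sum>j\<in>{j. \<Gamma> j = k}. outer (P j *v x) (B j)))) 
      \<le> Re (trace (W k ** (\<Sum>j\<in>{j. \<Gamma> j = k}. outer (P j *v x) (B j))))" for k
  proof -
    obtain U S V where "is_full_svd (\<Sum>j\<in>{j. \<Gamma> j = k}. outer (P j *v x) (B j)) U S V" "W k = V ** cadj U"
      using svd by blast
    then show ?thesis using svd_opt[of _ U S V "W' k"] W' by simp
  qed
  then have "(\<Sum>k\<in>UNIV. Re (trace (W' k ** (\<Sum>j\<in>{j. \<Gamma> j = k}. outer (P j *v x) (B j)))))
     \<le> (\<Sum>k\<in>UNIV. Re (trace (W k ** (\<Sum>j\<in>{j. \<Gamma> j = k}. outer (P j *v x) (B j)))))"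
    by (rule sum_mono)
  then show "(\<Sum>j\<in>UNIV. (norm (W (\<Gamma> j) *v (P j *v x) - B j))\<^sup>2) \<le> (\<Sum>j\<in>UNIV. (norm (W' (\<Gamma> j) *v (P j *v x) - B j))\<^sup>2)"
    unfolding fit_expand[OF uW] fit_expand[OF W'] by simp
qed

lemma thr_entry: "(hard_thr \<eta> z)$i = 0 \<or> ((hard_thr \<eta> z)$i = z$i \<and> \<eta> \<le> norm (z$i))"
  by (auto simp: hard_thr_def)

lemma thr_opt:
  assumes eta: "\<eta> > 0"
  shows "(norm (z - hard_thr \<eta> z))\<^sup>2 + \<eta>\<^sup>2 * real (l0 (hard_thr \<eta> z)) \<le> (norm (z - b))\<^sup>2 + \<eta>\<^sup>2 * real (l0 b)"
proof -
  have e: "(norm (z$i - (hard_thr \<eta> z)$i))\<^sup>2 + \<eta>\<^sup>2 * (if (hard_thr \<eta> z)$i \<noteq> 0 then 1 else 0)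
      \<le> (norm (z$i - b$i))\<^sup>2 + \<eta>\<^sup>2 * (if b$i \<noteq> 0 then 1 else 0)" for i
  proof (cases "norm (z$i) < \<eta>")
    case True
    then have "(norm (z$i))\<^sup>2 \<le> \<eta>\<^sup>2" using eta by (simp add: power_mono)
    with True show ?thesis by (auto simp: hard_thr_def intro!: add_increasing)
  next
    case False
    then have "\<eta>\<^sup>2 \<le> (norm (z$i))\<^sup>2" using eta by (simp add: power_mono)
    with False eta show ?thesis by (auto simp: hard_thr_def)
  qed
  show ?thesis
    unfolding norm2_vec l0_sum sum_distrib_left sum.distrib[symmetric]
    by (rule sum_mono) (use e in simp)
qed

lemma thr_norm: "norm (hard_thr \<eta> z) \<le> norm z"
  unfolding norm_vec_def by (rule L2_set_mono) (auto simp: hard_thr_def)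


lemma tendsto_mv:
  fixes A :: "'x \<Rightarrow> complex^'a^'b"
  assumes "(A \<longlongrightarrow> A0) F" "(v \<longlongrightarrow> v0) F"
  shows "((\<lambda>n. A n *v v n) \<longlongrightarrow> A0 *v v0) F"
  unfolding matrix_vector_mult_def
  by (intro tendsto_vec_lambda tendsto_sum tendsto_mult tendsto_vec_nth assms)

lemma tendsto_mm:
  fixes A :: "'x \<Rightarrow> complex^'a^'b"
  assumes "(A \<longlongrightarrow> A0) F" "(B \<longlongrightarrow> B0) F"
  shows "((\<lambda>n. A n ** B n) \<longlongrightarrow> A0 ** B0) F"
  unfolding matrix_matrix_mult_def
  by (intro tendsto_vec_lambda tendsto_sum tendsto_mult tendsto_vec_nth assms)

lemma tendsto_cadj:
  fixes A :: "'x \<Rightarrow> complex^'a^'b"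
  assumes "(A \<longlongrightarrow> A0) F"
  shows "((\<lambda>n. cadj (A n)) \<longlongrightarrow> cadj A0) F"
  unfolding cadj_def
  by (intro tendsto_vec_lambda tendsto_cnj tendsto_vec_nth assms)

lemma unitary_limit:
  fixes W :: "nat \<Rightarrow> complex^'n^'n"
  assumes "W \<longlonglongrightarrow> W0" "\<forall>\<^sub>F n in sequentially. unitary_mat (W n)"
  shows "unitary_mat W0"
proof -
  have "(\<lambda>n. cadj (W n) ** W n) \<longlonglongrightarrow> cadj W0 ** W0"
    by (intro tendsto_mm tendsto_cadj assms(1))
  moreover have "((\<lambda>n. cadj (W n) ** W n) \<longlonglongrightarrow> mat 1)"
    by (rule tendsto_eventually) (use assms(2) in \<open>simp add: unitary_mat_def\<close>)
  ultimately show ?thesis unfolding unitary_mat_def using LIMSEQ_unique by blast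
qed

lemma entries_eventually:
  fixes b :: "nat \<Rightarrow> complex^'n"
  assumes lim: "b \<longlonglongrightarrow> b0" and ent: "\<forall>\<^sub>F n in sequentially. \<forall>i. b n $ i = 0 \<or> \<eta> \<le> norm (b n $ i)"
    and eta: "\<eta> > 0"
  shows "\<forall>\<^sub>F n in sequentially. \<forall>i. (b n $ i \<noteq> 0) = (b0 $ i \<noteq> 0)"
proof (rule eventually_all_finite)
  fix i
  have li: "(\<lambda>n. b n $ i) \<longlonglongrightarrow> b0 $ i" by (intro tendsto_vec_nth lim)
  show "\<forall>\<^sub>F n in sequentially. (b n $ i \<noteq> 0) = (b0 $ i \<noteq> 0)"
  proof (cases "b0 $ i = 0")
    case True
    then have "(\<lambda>n. norm (b n $ i)) \<longlonglongrightarrow> 0" using tendsto_norm[OF li] by simp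
    then have "\<forall>\<^sub>F n in sequentially. norm (b n $ i) < \<eta>" using eta by (rule order_tendstoD)
    with ent show ?thesis by eventually_elim (use True in force)
  next
    case False
    then show ?thesis using tendsto_imp_eventually_ne[OF li False] by (auto elim: eventually_mono)
  qed
qed

lemma l0_eventually:
  fixes b :: "nat \<Rightarrow> complex^'n"
  assumes "b \<longlonglongrightarrow> b0" "\<forall>\<^sub>F n in sequentially. \<forall>i. b n $ i = 0 \<or> \<eta> \<le> norm (b n $ i)" "\<eta> > 0"
  shows "\<forall>\<^sub>F n in sequentially. l0 (b n) = l0 b0"
  using entries_eventually[OF assms] by eventually_elim (simp add: l0_def)

lemma thr_limit:
  fixes z :: "nat \<Rightarrow> complex^'n"
  assumes lz: "z \<longlonglongrightarrow> z0" and lb: "(\<lambda>n. hard_thr \<eta> (z n)) \<longlonglongrightarrow> b0" and eta: "\<eta> > 0"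
  shows "(b0$i \<noteq> 0 \<longrightarrow> b0$i = z0$i \<and> \<eta> \<le> norm (b0$i)) \<and> (b0$i = 0 \<longrightarrow> norm (z0$i) \<le> \<eta>)"
proof -
  have lzi: "(\<lambda>n. z n $ i) \<longlonglongrightarrow> z0 $ i" by (intro tendsto_vec_nth lz)
  have lbi: "(\<lambda>n. hard_thr \<eta> (z n) $ i) \<longlonglongrightarrow> b0 $ i" by (intro tendsto_vec_nth lb)
  have A: "b0$i = z0$i \<and> \<eta> \<le> norm (b0$i)" if nz: "b0$i \<noteq> 0"
  proof -
    have ev: "\<forall>\<^sub>F n in sequentially. hard_thr \<eta> (z n) $ i \<noteq> 0"
      by (rule tendsto_imp_eventually_ne[OF lbi nz])
    then have ev2: "\<forall>\<^sub>F n in sequentially. hard_thr \<eta> (z n) $ i = z n $ i \<and> \<eta> \<le> norm (z n $ i)"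
      by eventually_elim (use thr_entry in blast)
    have "(\<lambda>n. hard_thr \<eta> (z n) $ i) \<longlonglongrightarrow> z0 $ i"
      by (rule Lim_transform_eventually[OF lzi]) (use ev2 in \<open>auto elim: eventually_mono\<close>)
    then have eq: "b0$i = z0$i" using lbi LIMSEQ_unique by blast
    have "\<eta> \<le> norm (z0 $ i)"
      by (rule tendsto_lowerbound[OF tendsto_norm[OF lzi]]) (use ev2 in \<open>auto elim: eventually_mono\<close>)
    with eq show ?thesis by simp
  qed
  have B: "norm (z0$i) \<le> \<eta>" if z: "b0$i = 0"
  proof (rule ccontr)
    assume "\<not> norm (z0$i) \<le> \<eta>"
    then have "\<forall>\<^sub>F n in sequentially. \<eta> < norm (z n $ i)"
      using order_tendstoD(1)[OF tendsto_norm[OF lzi]] by simp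
    then have ev2: "\<forall>\<^sub>F n in sequentially. hard_thr \<eta> (z n) $ i = z n $ i"
      by eventually_elim (simp add: hard_thr_def)
    have "(\<lambda>n. hard_thr \<eta> (z n) $ i) \<longlonglongrightarrow> z0 $ i"
      by (rule Lim_transform_eventually[OF lzi]) (use ev2 in \<open>auto elim: eventually_mono\<close>)
    then have "b0$i = z0$i" using lbi LIMSEQ_unique by blast
    with z \<open>\<not> norm (z0$i) \<le> \<eta>\<close> eta show False by simp
  qed
  show ?thesis using A B by blast
qed


lemma compact_fun:
  fixes f :: "nat \<Rightarrow> 'i::finite \<Rightarrow> 'a::{heine_borel,real_normed_vector}"
  assumes "\<forall>n i. norm (f n i) \<le> c"
  shows "\<exists>r l. strict_mono r \<and> (\<forall>i. (\<lambda>n. f (r n) i) \<longlonglongrightarrow> l i)"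
proof -
  define g where "g n = (\<chi> i. f n i)" for n
  have "norm (g n) \<le> real CARD('i) * c" for n
  proof -
    have "norm (g n) \<le> (\<Sum>i\<in>UNIV. norm (g n $ i))" by (rule norm_le_l1_gen)
    also have "\<dots> \<le> (\<Sum>i\<in>(UNIV::'i set). c)" by (rule sum_mono) (simp add: g_def assms)
    finally show ?thesis by simp
  qed
  then have "bounded (range g)" by (auto simp: bounded_iff)
  then obtain L r where r: "strict_mono r" "(g \<circ> r) \<longlonglongrightarrow> L"
    using bounded_imp_convergent_subsequence by blast
  have "(\<lambda>n. f (r n) i) \<longlonglongrightarrow> L $ i" for i
    using tendsto_vec_nth[OF r(2), of i] by (simp add: g_def o_def)
  with r show ?thesis by blast
qed

lemma compact_single:
  fixes f :: "nat \<Rightarrow> 'a::{heine_borel,real_normed_vector}"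
  assumes "\<forall>n. norm (f n) \<le> c"
  shows "\<exists>r l. strict_mono r \<and> (\<lambda>n. f (r n)) \<longlonglongrightarrow> l"
proof -
  have "bounded (range f)" using assms by (auto simp: bounded_iff)
  then obtain l r where "strict_mono r" "(f \<circ> r) \<longlonglongrightarrow> l"
    using bounded_imp_convergent_subsequence by blast
  then show ?thesis unfolding o_def by blast
qed

lemma finite_const_subseq:
  fixes g :: "nat \<Rightarrow> 'b::finite"
  shows "\<exists>(r::nat\<Rightarrow>nat) v. strict_mono r \<and> (\<forall>n. g (r n) = v)"
proof -
  have "finite (g ` UNIV)" by simp
  moreover have "infinite (UNIV :: nat set)" by simp
  ultimately obtain v where "infinite (g -` {v})"
    by (rule inf_img_fin_domE) 
  then obtain r :: "nat \<Rightarrow> nat" where r: "strict_mono r" "\<forall>n. r n \<in> g -` {v}"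
    using infinite_enumerate[of "g -` {v}"] by blast
  from r have "\<forall>n. g (r n) = v" by simp
  with r(1) show ?thesis by (intro exI[of _ r] exI[of _ v]) simp
qed


lemma bound_from_1:
  fixes f :: "nat \<Rightarrow> 'a::real_normed_vector"
  assumes "\<forall>n\<ge>1. norm (f n) \<le> (c::real)"
  shows "\<exists>c'. \<forall>n. norm (f n) \<le> c'"
proof -
  have "norm (f n) \<le> max c (norm (f 0))" for n
  proof (cases n)
    case (Suc m)
    then have "norm (f n) \<le> c" using assms by simp
    then show ?thesis by simp
  qed simp
  then show ?thesis by blast
qed

lemma bound_from_1_fun:
  fixes f :: "nat \<Rightarrow> 'i::finite \<Rightarrow> 'a::real_normed_vector"
  assumes "\<forall>n\<ge>1. \<forall>i. norm (f n i) \<le> (c::real)"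
  shows "\<exists>c'. \<forall>n i. norm (f n i) \<le> c'"
proof -
  have "norm (f n i) \<le> max c (\<Sum>i\<in>UNIV. norm (f 0 i))" for n i
  proof (cases n)
    case 0
    have "norm (f 0 i) \<le> (\<Sum>i\<in>UNIV. norm (f 0 i))"
      by (rule member_le_sum) auto
    then show ?thesis using 0 by simp
  next
    case (Suc m)
    then have "1 \<le> n" by simp
    then have "norm (f n i) \<le> c" using assms by blast
    then show ?thesis by simp
  qed
  then show ?thesis by blast
qed


locale A2loc =
  fixes A :: "complex^'p^'m" and y :: "complex^'m"
    and P :: "'j::finite \<Rightarrow> complex^'p^'n"
    and \<nu> \<eta> C :: real
    and Wt :: "nat \<Rightarrow> 'k::{finite,linorder} \<Rightarrow> complex^'n^'n"
    and Bt :: "nat \<Rightarrow> 'j \<Rightarrow> complex^'n"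
    and \<Gamma>t :: "nat \<Rightarrow> 'j \<Rightarrow> 'k"
    and xt :: "nat \<Rightarrow> complex^'p"
  assumes pos: "\<nu> > 0" "\<eta> > 0" "C > 0"
    and iter: "A2_iterates A y P \<nu> \<eta> C Wt Bt \<Gamma>t xt"
begin

definition fit :: "('k \<Rightarrow> complex^'n^'n) \<Rightarrow> ('j \<Rightarrow> complex^'n) \<Rightarrow> ('j \<Rightarrow> 'k) \<Rightarrow> complex^'p \<Rightarrow> real" where
  "fit W B \<Gamma> x = \<nu> * (norm (A *v x - y))\<^sup>2 + (\<Sum>j\<in>UNIV. (norm (W (\<Gamma> j) *v (P j *v x) - B j))\<^sup>2)"

definition pen :: "('j \<Rightarrow> complex^'n) \<Rightarrow> real" where
  "pen B = (\<Sum>j\<in>UNIV. \<eta>\<^sup>2 * real (l0 (B j)))"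

definition hr where "hr W B \<Gamma> x = fit W B \<Gamma> x + pen B"

definition costj :: "('k \<Rightarrow> complex^'n^'n) \<Rightarrow> complex^'n \<Rightarrow> 'k \<Rightarrow> complex^'p \<Rightarrow> 'j \<Rightarrow> real" where
  "costj W b k x j = (norm (W k *v (P j *v x) - b))\<^sup>2 + \<eta>\<^sup>2 * real (l0 b)"

lemma hr_costj: "hr W B \<Gamma> x = \<nu> * (norm (A *v x - y))\<^sup>2 + (\<Sum>j\<in>UNIV. costj W (B j) (\<Gamma> j) x j)"
  by (simp add: hr_def fit_def pen_def costj_def sum.distrib)

lemma hobj_eq: "hobj A y P \<nu> \<eta> C W B \<Gamma> x =
   (if (\<forall>k. unitary_mat (W k)) \<and> norm x \<le> C then ereal (hr W B \<Gamma> x) else \<infinity>)"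
  by (simp add: hobj_def hr_def fit_def pen_def sum.distrib)

lemma step: "A2_step A y P \<nu> \<eta> C (Bt t) (\<Gamma>t t) (xt t) (Wt (Suc t)) (Bt (Suc t)) (\<Gamma>t (Suc t)) (xt (Suc t))"
  using iter unfolding A2_iterates_def by blast

lemma svd_t: "\<forall>k. \<exists>U S V. is_full_svd (\<Sum>j\<in>{j. \<Gamma>t t j = k}. outer (P j *v xt t) (Bt t j)) U S V
    \<and> Wt (Suc t) k = V ** cadj U"
  by (rule step[of t, unfolded A2_step_def, THEN conjunct1])

lemma part2: "\<forall>j. (\<forall>k. sc_cost \<eta> (Wt (Suc t) (\<Gamma>t (Suc t) j)) (P j *v xt t) \<le> sc_cost \<eta> (Wt (Suc t) k) (P j *v xt t))
            \<and> (\<forall>k. k < \<Gamma>t (Suc t) j \<longrightarrow> sc_cost \<eta> (Wt (Suc t) (\<Gamma>t (Suc t) j)) (P j *v xt t) < sc_cost \<eta> (Wt (Suc t) k) (P j *v xt t))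
            \<and> Bt (Suc t) j = hard_thr \<eta> (Wt (Suc t) (\<Gamma>t (Suc t) j) *v (P j *v xt t))"
  by (rule step[of t, unfolded A2_step_def, THEN conjunct2, THEN conjunct1])

lemma xn_t: "norm (xt (Suc t)) \<le> C"
  by (rule step[of t, unfolded A2_step_def, THEN conjunct2, THEN conjunct2, THEN conjunct1])

lemma part4: "\<forall>z. norm z \<le> C \<longrightarrow>
           \<nu> * (norm (A *v xt (Suc t) - y))\<^sup>2 + (\<Sum>j\<in>UNIV. (norm (Wt (Suc t) (\<Gamma>t (Suc t) j) *v (P j *v xt (Suc t)) - Bt (Suc t) j))\<^sup>2)
         \<le> \<nu> * (norm (A *v z - y))\<^sup>2 + (\<Sum>j\<in>UNIV. (norm (Wt (Suc t) (\<Gamma>t (Suc t) j) *v (P j *v z) - Bt (Suc t) j))\<^sup>2)"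
  by (rule step[of t, unfolded A2_step_def, THEN conjunct2, THEN conjunct2, THEN conjunct2])

lemma unitary_one: "unitary_mat (mat 1 :: complex^'a^'a)"
proof -
  have "cadj (mat 1 :: complex^'a^'a) = mat 1" by (auto simp: cadj_def mat_def vec_eq_iff)
  then show ?thesis by (simp add: unitary_mat_def matrix_mul_lid)
qed

lemma unit_t: "unitary_mat (Wt (Suc t) k)"
  using wstep_opt(1)[OF svd_t[of t], of "\<lambda>_. mat 1"] unitary_one by blast

lemma unit_t': "1 \<le> t \<Longrightarrow> unitary_mat (Wt t k)"
  using unit_t[of "t - 1"] by simp


lemma xn_t': "1 \<le> t \<Longrightarrow> norm (xt t) \<le> C"
  using xn_t[of "t - 1"] by simp

lemma xmin_t: "norm z \<le> C \<Longrightarrow> fit (Wt (Suc t)) (Bt (Suc t)) (\<Gamma>t (Suc t)) (xt (Suc t)) \<le> fit (Wt (Suc t)) (Bt (Suc t)) (\<Gamma>t (Suc t)) z"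
  using part4[of t] unfolding fit_def by blast

lemma Bdef_t: "Bt (Suc t) j = hard_thr \<eta> (Wt (Suc t) (\<Gamma>t (Suc t) j) *v (P j *v xt t))"
  using part2[of t] by blast

lemma ent_t: "Bt (Suc t) j $ i = 0 \<or> \<eta> \<le> norm (Bt (Suc t) j $ i)"
  unfolding Bdef_t using thr_entry by metis

lemma ent_t': "1 \<le> t \<Longrightarrow> Bt t j $ i = 0 \<or> \<eta> \<le> norm (Bt t j $ i)"
  using ent_t[of "t - 1"] by simp

lemma scopt_t: "costj (Wt (Suc t)) (Bt (Suc t) j) (\<Gamma>t (Suc t) j) (xt t) j \<le> costj (Wt (Suc t)) b k (xt t) j"
proof -
  have s: "\<forall>k. sc_cost \<eta> (Wt (Suc t) (\<Gamma>t (Suc t) j)) (P j *v xt t) \<le> sc_cost \<eta> (Wt (Suc t) k) (P j *v xt t)"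
    using part2[of t] by blast
  have "costj (Wt (Suc t)) (Bt (Suc t) j) (\<Gamma>t (Suc t) j) (xt t) j = sc_cost \<eta> (Wt (Suc t) (\<Gamma>t (Suc t) j)) (P j *v xt t)"
    by (simp add: costj_def sc_cost_def Bdef_t)
  also have "\<dots> \<le> sc_cost \<eta> (Wt (Suc t) k) (P j *v xt t)" using s by blast
  also have "\<dots> \<le> costj (Wt (Suc t)) b k (xt t) j"
    unfolding sc_cost_def costj_def by (rule thr_opt[OF pos(2)])
  finally show ?thesis .
qed

lemma wopt_t: "\<forall>k. unitary_mat (W' k) \<Longrightarrow> fit (Wt (Suc t)) (Bt t) (\<Gamma>t t) (xt t) \<le> fit W' (Bt t) (\<Gamma>t t) (xt t)"
  unfolding fit_def using wstep_opt(2)[OF svd_t[of t]] by simp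

definition H where "H t = hr (Wt t) (Bt t) (\<Gamma>t t) (xt t)"
definition M1 where "M1 t = hr (Wt (Suc t)) (Bt t) (\<Gamma>t t) (xt t)"
definition M2 where "M2 t = hr (Wt (Suc t)) (Bt (Suc t)) (\<Gamma>t (Suc t)) (xt t)"

lemma M1_le: "1 \<le> t \<Longrightarrow> M1 t \<le> H t"
  unfolding M1_def H_def hr_def using wopt_t[of "Wt t" t] unit_t' by simp

lemma M2_le: "M2 t \<le> M1 t"
  unfolding M2_def M1_def hr_costj by (simp add: sum_mono scopt_t)

lemma H_le: "1 \<le> t \<Longrightarrow> H (Suc t) \<le> M2 t"
  unfolding M2_def H_def hr_def using xmin_t[OF xn_t'] by simp

lemma hr_nonneg: "0 \<le> hr W B \<Gamma> x"
  unfolding hr_def fit_def pen_def using pos by (auto intro!: add_nonneg_nonneg sum_nonneg)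

definition hstar where "hstar = lim (\<lambda>n. H (Suc n))"

lemma H_lim: "H \<longlonglongrightarrow> hstar"
proof -
  have "decseq (\<lambda>n. H (Suc n))"
  proof (rule decseq_SucI)
    fix n
    show "H (Suc (Suc n)) \<le> H (Suc n)"
      using H_le[of "Suc n"] M2_le[of "Suc n"] M1_le[of "Suc n"] by simp
  qed
  moreover have "\<forall>i. 0 \<le> H (Suc i)" by (simp add: H_def hr_nonneg)
  ultimately obtain L where "(\<lambda>n. H (Suc n)) \<longlonglongrightarrow> L" by (rule decseq_convergent)
  moreover have "hstar = L" unfolding hstar_def by (rule limI) fact
  ultimately have "(\<lambda>n. H (Suc n)) \<longlonglongrightarrow> hstar" by simp
  then show ?thesis by (rule LIMSEQ_imp_Suc)
qed

lemma M1_lim: "M1 \<longlonglongrightarrow> hstar"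
proof -
  have "(\<lambda>n. M1 (Suc n)) \<longlonglongrightarrow> hstar"
  proof (rule tendsto_sandwich)
    show "\<forall>\<^sub>F n in sequentially. H (Suc (Suc n)) \<le> M1 (Suc n)"
    proof (intro always_eventually allI)
      fix n show "H (Suc (Suc n)) \<le> M1 (Suc n)" using H_le[of "Suc n"] M2_le[of "Suc n"] by simp
    qed
    show "\<forall>\<^sub>F n in sequentially. M1 (Suc n) \<le> H (Suc n)" using M1_le by auto
    show "(\<lambda>n. H (Suc (Suc n))) \<longlonglongrightarrow> hstar" using LIMSEQ_Suc[OF H_lim] LIMSEQ_Suc[OF LIMSEQ_Suc[OF H_lim]] by simp_all
    show "(\<lambda>n. H (Suc n)) \<longlonglongrightarrow> hstar" using LIMSEQ_Suc[OF H_lim] LIMSEQ_Suc[OF LIMSEQ_Suc[OF H_lim]] by simp_all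
  qed
  then show ?thesis by (rule LIMSEQ_imp_Suc)
qed

lemma M2_lim: "M2 \<longlonglongrightarrow> hstar"
proof -
  have "(\<lambda>n. M2 (Suc n)) \<longlonglongrightarrow> hstar"
  proof (rule tendsto_sandwich)
    show "\<forall>\<^sub>F n in sequentially. H (Suc (Suc n)) \<le> M2 (Suc n)"
      using H_le by auto
    show "\<forall>\<^sub>F n in sequentially. M2 (Suc n) \<le> H (Suc n)"
    proof (intro always_eventually allI)
      fix n show "M2 (Suc n) \<le> H (Suc n)" using M1_le[of "Suc n"] M2_le[of "Suc n"] by simp
    qed
    show "(\<lambda>n. H (Suc (Suc n))) \<longlonglongrightarrow> hstar" using LIMSEQ_Suc[OF H_lim] LIMSEQ_Suc[OF LIMSEQ_Suc[OF H_lim]] by simp_all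
    show "(\<lambda>n. H (Suc n)) \<longlonglongrightarrow> hstar" using LIMSEQ_Suc[OF H_lim] LIMSEQ_Suc[OF LIMSEQ_Suc[OF H_lim]] by simp_all
  qed
  then show ?thesis by (rule LIMSEQ_imp_Suc)
qed

end


context A2loc begin

lemma Wbound: "\<exists>c. \<forall>t k. norm (Wt t k) \<le> c"
  by (rule bound_from_1_fun) (use unit_t' unitary_bound in blast)

lemma xbound: "\<exists>c. \<forall>t. norm (xt t) \<le> c"
  by (rule bound_from_1) (use xn_t' in blast)

lemma Bbound: "\<exists>c. \<forall>t j. norm (Bt t j) \<le> c"
proof -
  obtain cx where cx: "\<forall>t. norm (xt t) \<le> cx" using xbound by blast
  define cP where "cP = (\<Sum>j\<in>UNIV. \<Sum>i\<in>UNIV. \<Sum>k\<in>UNIV. norm (P j $ i $ k))"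
  have "norm (Bt t j) \<le> cP * cx" if "1 \<le> t" for t j
  proof -
    have "t \<noteq> 0" using that by simp
    then obtain s where t: "t = Suc s" using not0_implies_Suc by blast
    have "norm (Bt t j) \<le> norm (P j *v xt s)"
      unfolding t Bdef_t using thr_norm unitary_norm unit_t by metis
    also have "\<dots> \<le> (\<Sum>i\<in>UNIV. \<Sum>k\<in>UNIV. norm (P j $ i $ k)) * norm (xt s)" by (rule norm_mv_bound)
    also have "\<dots> \<le> cP * cx"
    proof (rule mult_mono)
      show "(\<Sum>i\<in>UNIV. \<Sum>k\<in>UNIV. norm (P j $ i $ k)) \<le> cP"
        unfolding cP_def by (rule member_le_sum) (auto intro!: sum_nonneg)
    qed (auto simp: cx cP_def intro!: sum_nonneg)
    finally show ?thesis .
  qed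
  then show ?thesis by (intro bound_from_1_fun) blast
qed

lemma subseq_conv:
  fixes s :: "nat \<Rightarrow> nat"
  assumes s: "strict_mono s"
  shows "\<exists>(r::nat\<Rightarrow>nat) W B \<Gamma> x. strict_mono r \<and> (\<forall>k. (\<lambda>i. Wt (s (r i)) k) \<longlonglongrightarrow> W k)
     \<and> (\<forall>j. (\<lambda>i. Bt (s (r i)) j) \<longlonglongrightarrow> B j) \<and> (\<forall>i. \<Gamma>t (s (r i)) = \<Gamma>) \<and> (\<lambda>i. xt (s (r i))) \<longlonglongrightarrow> x"
proof -
  obtain cW where cW: "\<forall>t k. norm (Wt t k) \<le> cW" using Wbound by blast
  obtain cB where cB: "\<forall>t j. norm (Bt t j) \<le> cB" using Bbound by blast
  obtain cx where cx: "\<forall>t. norm (xt t) \<le> cx" using xbound by blast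
  obtain r1 :: "nat \<Rightarrow> nat" and \<Gamma> where r1: "strict_mono r1" "\<forall>n. \<Gamma>t (s (r1 n)) = \<Gamma>"
    using finite_const_subseq[of "\<lambda>n. \<Gamma>t (s n)"] by blast
  obtain r2 :: "nat \<Rightarrow> nat" and W where r2: "strict_mono r2" "\<forall>k. (\<lambda>n. Wt (s (r1 (r2 n))) k) \<longlonglongrightarrow> W k"
    using compact_fun[of "\<lambda>n. Wt (s (r1 n))" cW] cW by blast
  obtain r3 :: "nat \<Rightarrow> nat" and B where r3: "strict_mono r3" "\<forall>j. (\<lambda>n. Bt (s (r1 (r2 (r3 n)))) j) \<longlonglongrightarrow> B j"
    using compact_fun[of "\<lambda>n. Bt (s (r1 (r2 n)))" cB] cB by blast
  obtain r4 :: "nat \<Rightarrow> nat" and x where r4: "strict_mono r4" "(\<lambda>n. xt (s (r1 (r2 (r3 (r4 n)))))) \<longlonglongrightarrow> x"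
    using compact_single[of "\<lambda>n. xt (s (r1 (r2 (r3 n))))" cx] cx by blast
  define r where "r = r1 \<circ> r2 \<circ> r3 \<circ> r4"
  have sm: "strict_mono r" unfolding r_def using r1 r2 r3 r4 by (intro strict_mono_o)
  have "(\<lambda>i. Wt (s (r i)) k) \<longlonglongrightarrow> W k" for k
    using LIMSEQ_subseq_LIMSEQ[OF r2(2)[rule_format, of k] strict_mono_o[OF r3(1) r4(1)]]
    by (simp add: r_def o_def)
  moreover have "(\<lambda>i. Bt (s (r i)) j) \<longlonglongrightarrow> B j" for j
    using LIMSEQ_subseq_LIMSEQ[OF r3(2)[rule_format, of j] r4(1)]
    by (simp add: r_def o_def)
  moreover have "\<forall>i. \<Gamma>t (s (r i)) = \<Gamma>" using r1 by (simp add: r_def)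
  moreover have "(\<lambda>i. xt (s (r i))) \<longlonglongrightarrow> x" using r4 by (simp add: r_def o_def)
  ultimately show ?thesis using sm by blast
qed

lemma accum_norm:
  assumes "is_accum_point Wt Bt \<Gamma>t xt W B \<Gamma> x"
  shows "\<exists>r::nat\<Rightarrow>nat. strict_mono r \<and> (\<forall>k. (\<lambda>i. Wt (r i) k) \<longlonglongrightarrow> W k)
     \<and> (\<forall>j. (\<lambda>i. Bt (r i) j) \<longlonglongrightarrow> B j) \<and> (\<forall>i. \<Gamma>t (r i) = \<Gamma>) \<and> (\<lambda>i. xt (r i)) \<longlonglongrightarrow> x \<and> (\<forall>i. 2 \<le> r i)"
proof -
  obtain r :: "nat \<Rightarrow> nat" where r: "strict_mono r" "\<forall>k. (\<lambda>i. Wt (r i) k) \<longlonglongrightarrow> W k"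
     "\<forall>j. (\<lambda>i. Bt (r i) j) \<longlonglongrightarrow> B j" "\<forall>\<^sub>F i in sequentially. \<Gamma>t (r i) = \<Gamma>" "(\<lambda>i. xt (r i)) \<longlonglongrightarrow> x"
    using assms unfolding is_accum_point_def by blast
  obtain N where N: "\<forall>i\<ge>N. \<Gamma>t (r i) = \<Gamma>" using r(4) unfolding eventually_sequentially by blast
  define q where "q i = i + (N + 2)" for i
  have q: "strict_mono q" unfolding q_def by (auto simp: strict_mono_def)
  have "strict_mono (r \<circ> q)" using r(1) q by (rule strict_mono_o)
  moreover have "(\<lambda>i. Wt ((r \<circ> q) i) k) \<longlonglongrightarrow> W k" for k
    using LIMSEQ_subseq_LIMSEQ[OF r(2)[rule_format, of k] q] by (simp add: o_def)
  moreover have "(\<lambda>i. Bt ((r \<circ> q) i) j) \<longlonglongrightarrow> B j" for j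
    using LIMSEQ_subseq_LIMSEQ[OF r(3)[rule_format, of j] q] by (simp add: o_def)
  moreover have "\<forall>i. \<Gamma>t ((r \<circ> q) i) = \<Gamma>" using N by (simp add: q_def)
  moreover have "(\<lambda>i. xt ((r \<circ> q) i)) \<longlonglongrightarrow> x"
    using LIMSEQ_subseq_LIMSEQ[OF r(5) q] by (simp add: o_def)
  moreover have "\<forall>i. 2 \<le> (r \<circ> q) i"
  proof
    fix i
    have "i + (N + 2) \<le> r (i + (N + 2))" by (rule seq_suble[OF r(1)])
    then show "2 \<le> (r \<circ> q) i" by (simp add: q_def)
  qed
  ultimately show ?thesis by blast
qed

lemma fit_tendsto:
  assumes "\<forall>k. (\<lambda>i. W i k) \<longlonglongrightarrow> W0 k" "\<forall>j. (\<lambda>i. B i j) \<longlonglongrightarrow> B0 j" "x \<longlonglongrightarrow> x0"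
  shows "(\<lambda>i. fit (W i) (B i) \<Gamma> (x i)) \<longlonglongrightarrow> fit W0 B0 \<Gamma> x0"
  unfolding fit_def using assms
  by (intro tendsto_intros tendsto_mv) auto

lemma costj_tendsto:
  assumes "\<forall>k. (\<lambda>i. W i k) \<longlonglongrightarrow> W0 k" "b \<longlonglongrightarrow> b0" "x \<longlonglongrightarrow> x0"
    and "\<forall>\<^sub>F i in sequentially. \<forall>l. b i $ l = 0 \<or> \<eta> \<le> norm (b i $ l)"
  shows "(\<lambda>i. costj (W i) (b i) k (x i) j) \<longlonglongrightarrow> costj W0 b0 k x0 j"
proof -
  have "(\<lambda>i. real (l0 (b i))) \<longlonglongrightarrow> real (l0 b0)"
    by (rule tendsto_eventually) (use l0_eventually[OF assms(2,4) pos(2)] in \<open>auto elim: eventually_mono\<close>)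
  then show ?thesis
    unfolding costj_def using assms
    by (intro tendsto_intros tendsto_mv) auto
qed

lemma hr_tendsto:
  assumes "\<forall>k. (\<lambda>i. W i k) \<longlonglongrightarrow> W0 k" "\<forall>j. (\<lambda>i. B i j) \<longlonglongrightarrow> B0 j" "x \<longlonglongrightarrow> x0"
    and "\<forall>\<^sub>F i in sequentially. \<forall>j l. B i j $ l = 0 \<or> \<eta> \<le> norm (B i j $ l)"
  shows "(\<lambda>i. hr (W i) (B i) \<Gamma> (x i)) \<longlonglongrightarrow> hr W0 B0 \<Gamma> x0"
proof -
  have "\<forall>\<^sub>F i in sequentially. l0 (B i j) = l0 (B0 j)" for j
    by (rule l0_eventually[OF assms(2)[rule_format, of j] _ pos(2)], rule eventually_mono[OF assms(4)], blast)
  then have "\<forall>\<^sub>F i in sequentially. \<forall>j. l0 (B i j) = l0 (B0 j)" by (rule eventually_all_finite)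
  then have "(\<lambda>i. pen (B i)) \<longlonglongrightarrow> pen B0"
    by (rule tendsto_eventually[OF eventually_mono]) (simp add: pen_def)
  then show ?thesis unfolding hr_def using fit_tendsto[OF assms(1-3)] by (intro tendsto_add)
qed

end


lemma key3: "(norm (w - z))\<^sup>2 - (norm w)\<^sup>2 + (norm (w - d))\<^sup>2 = (norm (w - z - d))\<^sup>2 - 2 * inner z d"
  for w z d :: "'a::real_inner"
  unfolding power2_norm_eq_inner
  by (simp add: inner_diff_left inner_diff_right inner_commute algebra_simps)

lemma entry_ineq:
  fixes w z b d :: complex
  assumes e: "(b \<noteq> 0 \<longrightarrow> b = z \<and> \<eta> \<le> norm b) \<and> (b = 0 \<longrightarrow> norm z \<le> \<eta>)"
    and nd: "norm d < \<eta> / 2" and eta: "\<eta> > 0"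
  shows "\<eta>\<^sup>2 * (if b \<noteq> 0 then 1 else 0) \<le> (norm (w - z))\<^sup>2 - (norm (w - b))\<^sup>2 + (norm (w - b - d))\<^sup>2
      + \<eta>\<^sup>2 * (if b + d \<noteq> 0 then 1 else 0)"
proof (cases "b = 0")
  case False
  then have bz: "b = z" and nb: "\<eta> \<le> norm b" using e by auto
  have "b + d \<noteq> 0"
  proof
    assume "b + d = 0"
    then have "norm b = norm d" by (metis add.inverse_unique norm_minus_cancel)
    with nb nd eta show False by simp
  qed
  with False bz show ?thesis by simp
next
  case True
  then have nz: "norm z \<le> \<eta>" using e by auto
  have "inner z d \<le> norm z * norm d" by (rule norm_cauchy_schwarz)
  also have "\<dots> \<le> \<eta> * norm d" by (rule mult_right_mono[OF nz]) simp
  also have "\<dots> \<le> \<eta> * (\<eta> / 2)" by (rule mult_left_mono) (use nd eta in auto)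
  finally have "2 * inner z d \<le> \<eta>\<^sup>2" by (simp add: power2_eq_square)
  then have "0 \<le> (norm (w - z))\<^sup>2 - (norm w)\<^sup>2 + (norm (w - d))\<^sup>2 + \<eta>\<^sup>2"
    unfolding key3 using zero_le_power2[of "norm (w - z - d)"] by linarith
  with True show ?thesis by auto
qed

lemma vec_ineq:
  fixes w z b d :: "complex^'n"
  assumes e: "\<forall>i. (b$i \<noteq> 0 \<longrightarrow> b$i = z$i \<and> \<eta> \<le> norm (b$i)) \<and> (b$i = 0 \<longrightarrow> norm (z$i) \<le> \<eta>)"
    and nd: "\<forall>i. norm (d$i) < \<eta> / 2" and eta: "\<eta> > 0"
  shows "\<eta>\<^sup>2 * real (l0 b) \<le> (norm (w - z))\<^sup>2 - (norm (w - b))\<^sup>2 + (norm (w - b - d))\<^sup>2 + \<eta>\<^sup>2 * real (l0 (b + d))"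
  unfolding norm2_vec l0_sum sum_distrib_left sum_subtractf[symmetric] sum.distrib[symmetric]
  by (rule sum_mono) (use entry_ineq[OF _ _ eta] e nd in simp)

lemma norm_expand: "(norm ((M::complex^'p^'q) *v (x + s *\<^sub>R d) - c))\<^sup>2
   = (norm (M *v x - c))\<^sup>2 + 2 * s * inner (M *v x - c) (M *v d) + s\<^sup>2 * (norm (M *v d))\<^sup>2"
proof -
  have "M *v (x + s *\<^sub>R d) - c = (M *v x - c) + s *\<^sub>R (M *v d)"
    by (simp add: matrix_vector_right_distrib mv_scaleR)
  then show ?thesis unfolding norm2_add_scale[symmetric] by (simp only:)
qed

context A2loc begin

definition lin where "lin W B \<Gamma> x d = 2 * \<nu> * inner (A *v x - y) (A *v d)
   + (\<Sum>j\<in>UNIV. 2 * inner (W (\<Gamma> j) *v (P j *v x) - B j) (W (\<Gamma> j) *v (P j *v d)))"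
definition quad where "quad W \<Gamma> d = \<nu> * (norm (A *v d))\<^sup>2 + (\<Sum>j\<in>UNIV. (norm (W (\<Gamma> j) *v (P j *v d)))\<^sup>2)"

lemma mv_split: "(M::complex^'a^'b) *v (x + s *\<^sub>R d) - c = (M *v x - c) + s *\<^sub>R (M *v d)"
  by (simp add: matrix_vector_right_distrib mv_scaleR)

lemma fit_expand_s: "fit W B \<Gamma> (x + s *\<^sub>R d) = fit W B \<Gamma> x + s * lin W B \<Gamma> x d + s\<^sup>2 * quad W \<Gamma> d"
  unfolding fit_def lin_def quad_def matrix_vector_mul_assoc norm_expand
  by (simp add: sum.distrib sum_distrib_left algebra_simps del: inner_diff_left inner_diff_right)

lemma quad_nonneg: "0 \<le> quad W \<Gamma> d"
  unfolding quad_def using pos by (auto intro!: add_nonneg_nonneg sum_nonneg)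

lemma ball_convex: "norm x \<le> C \<Longrightarrow> norm (x + d) \<le> C \<Longrightarrow> 0 \<le> s \<Longrightarrow> s \<le> 1 \<Longrightarrow> norm (x + s *\<^sub>R d) \<le> C"
proof -
  assume a: "norm x \<le> C" "norm (x + d) \<le> C" "0 \<le> s" "s \<le> 1"
  have "x + s *\<^sub>R d = (1 - s) *\<^sub>R x + s *\<^sub>R (x + d)" by (simp add: algebra_simps)
  then have "norm (x + s *\<^sub>R d) \<le> (1 - s) * norm x + s * norm (x + d)"
    using a by (metis abs_of_nonneg diff_ge_0_iff_ge norm_scaleR norm_triangle_ineq)
  also have "\<dots> \<le> (1 - s) * C + s * C" using a by (intro add_mono mult_left_mono) auto
  finally show ?thesis by (simp add: algebra_simps)
qed

lemma lin_nonneg: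
  assumes xmin: "\<forall>z. norm z \<le> C \<longrightarrow> fit W B \<Gamma> x \<le> fit W B \<Gamma> z" and xC: "norm x \<le> C"
    and dC: "norm (x + d) \<le> C"
  shows "0 \<le> lin W B \<Gamma> x d"
proof (rule ccontr)
  assume "\<not> 0 \<le> lin W B \<Gamma> x d"
  then have ln: "lin W B \<Gamma> x d < 0" by simp
  define L where "L = lin W B \<Gamma> x d"
  define Q where "Q = quad W \<Gamma> d"
  have Q0: "0 \<le> Q" unfolding Q_def by (rule quad_nonneg)
  define s where "s = min 1 (- L / (2 * (Q + 1)))"
  have p2: "0 < 2 * (Q + 1)" using Q0 by simp
  have "L / (2 * (Q + 1)) < 0" by (rule divide_neg_pos) (use ln p2 in \<open>simp_all add: L_def\<close>)
  then have "0 < - L / (2 * (Q + 1))" by simp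
  then have s0: "0 < s" by (simp add: s_def)
  have s1: "s \<le> 1" by (simp add: s_def)
  have "fit W B \<Gamma> x \<le> fit W B \<Gamma> (x + s *\<^sub>R d)" using xmin ball_convex[OF xC dC] s0 s1 by simp
  then have "0 \<le> s * L + s\<^sup>2 * Q" unfolding fit_expand_s L_def Q_def by simp
  then have "0 \<le> s * (L + s * Q)" by (simp add: power2_eq_square algebra_simps)
  then have h: "0 \<le> L + s * Q" using s0 by (simp add: zero_le_mult_iff)
  have "s * Q \<le> (- L / (2 * (Q + 1))) * Q" by (rule mult_right_mono) (use Q0 in \<open>simp_all add: s_def\<close>)
  also have "\<dots> \<le> - L / 2"
  proof -
    have "(- L / (2 * (Q + 1))) * Q = (- L / 2) * (Q / (Q + 1))" using Q0 by (simp add: field_simps)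
    also have "\<dots> \<le> (- L / 2) * 1"
      by (rule mult_left_mono) (use Q0 ln in \<open>simp_all add: L_def\<close>)
    finally show ?thesis by simp
  qed
  finally have "s * Q \<le> - L / 2" .
  with h ln show False by (simp add: L_def)
qed

lemma pmatch:
  assumes uW: "\<forall>k. unitary_mat (W k)" and xmin: "\<forall>z. norm z \<le> C \<longrightarrow> fit W B \<Gamma> x \<le> fit W B \<Gamma> z"
    and xC: "norm x \<le> C" and x'C: "norm x' \<le> C" and eq: "fit W B \<Gamma> x' = fit W B \<Gamma> x"
  shows "P j *v x' = P j *v x"
proof -
  define d where "d = x' - x"
  have x': "x' = x + 1 *\<^sub>R d" by (simp add: d_def)
  have e1: "lin W B \<Gamma> x d = - quad W \<Gamma> d"
    using eq fit_expand_s[of W B \<Gamma> x 1 d] x' by simp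
  have mC: "norm (x + (1/2) *\<^sub>R d) \<le> C" using ball_convex[OF xC, of d "1/2"] x'C x' by simp
  have "fit W B \<Gamma> x \<le> fit W B \<Gamma> (x + (1/2) *\<^sub>R d)" using xmin mC by blast
  then have "quad W \<Gamma> d \<le> 0" unfolding fit_expand_s e1 by (simp add: power2_eq_square)
  then have "(\<Sum>j\<in>UNIV. (norm (W (\<Gamma> j) *v (P j *v d)))\<^sup>2) \<le> 0"
  proof -
    have "0 \<le> \<nu> * (norm (A *v d))\<^sup>2" using pos by simp
    with \<open>quad W \<Gamma> d \<le> 0\<close> show ?thesis unfolding quad_def by linarith
  qed
  then have "(\<Sum>j\<in>UNIV. (norm (W (\<Gamma> j) *v (P j *v d)))\<^sup>2) = 0" by (simp add: sum_nonneg antisym)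
  then have "(norm (W (\<Gamma> j) *v (P j *v d)))\<^sup>2 = 0" by (simp add: sum_nonneg_eq_0_iff)
  then have "P j *v d = 0" using unitary_zero uW by auto
  then show ?thesis by (simp add: d_def matrix_vector_mult_diff_distrib)
qed

lemma perturb:
  assumes uW: "\<forall>k. unitary_mat (W k)" and xmin: "\<forall>z. norm z \<le> C \<longrightarrow> fit W B \<Gamma> x \<le> fit W B \<Gamma> z"
    and xC: "norm x \<le> C"
    and ent: "\<forall>j i. (B j $ i \<noteq> 0 \<longrightarrow> B j $ i = (W (\<Gamma> j) *v (P j *v x)) $ i \<and> \<eta> \<le> norm (B j $ i))
                 \<and> (B j $ i = 0 \<longrightarrow> norm ((W (\<Gamma> j) *v (P j *v x)) $ i) \<le> \<eta>)"
    and dB: "\<forall>j i. norm (dB j $ i) < \<eta> / 2"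
  shows "hobj A y P \<nu> \<eta> C W B \<Gamma> x \<le> hobj A y P \<nu> \<eta> C W (\<lambda>j. B j + dB j) \<Gamma> (x + dx)"
proof (cases "norm (x + dx) \<le> C")
  case False
  then show ?thesis unfolding hobj_eq by simp
next
  case True
  define w where "w j = W (\<Gamma> j) *v (P j *v (x + dx))" for j
  define z where "z j = W (\<Gamma> j) *v (P j *v x)" for j
  have wz: "W (\<Gamma> j) *v (P j *v dx) = w j - z j" for j
    by (simp add: w_def z_def matrix_vector_right_distrib)
  have "fit W B \<Gamma> (x + dx) = fit W B \<Gamma> x + lin W B \<Gamma> x dx + quad W \<Gamma> dx"
    using fit_expand_s[of W B \<Gamma> x 1 dx] by simp
  then have f1: "fit W B \<Gamma> x + quad W \<Gamma> dx \<le> fit W B \<Gamma> (x + dx)"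
    using lin_nonneg[OF xmin xC True] by simp
  have q1: "(\<Sum>j\<in>UNIV. (norm (w j - z j))\<^sup>2) \<le> quad W \<Gamma> dx"
    unfolding quad_def wz[symmetric] using pos by simp
  have v: "\<eta>\<^sup>2 * real (l0 (B j)) \<le> (norm (w j - z j))\<^sup>2 - (norm (w j - B j))\<^sup>2 + (norm (w j - B j - dB j))\<^sup>2
      + \<eta>\<^sup>2 * real (l0 (B j + dB j))" for j
    by (rule vec_ineq) (use ent dB pos in \<open>simp_all add: z_def\<close>)
  have s: "(\<Sum>j\<in>UNIV. \<eta>\<^sup>2 * real (l0 (B j))) \<le> (\<Sum>j\<in>UNIV. (norm (w j - z j))\<^sup>2) - (\<Sum>j\<in>UNIV. (norm (w j - B j))\<^sup>2)
      + (\<Sum>j\<in>UNIV. (norm (w j - B j - dB j))\<^sup>2) + (\<Sum>j\<in>UNIV. \<eta>\<^sup>2 * real (l0 (B j + dB j)))"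
    unfolding sum_subtractf[symmetric] sum.distrib[symmetric] by (rule sum_mono) (rule v)
  have "hr W B \<Gamma> x \<le> hr W (\<lambda>j. B j + dB j) \<Gamma> (x + dx)"
  proof -
    have e2: "w j - (B j + dB j) = w j - B j - dB j" for j by (simp add: algebra_simps)
    show ?thesis using f1 q1 s unfolding hr_def fit_def pen_def
      by (simp add: w_def[symmetric] e2)
  qed
  then show ?thesis unfolding hobj_eq using uW xC True by simp
qed

end


context A2loc begin

lemma costj_tendsto_const:
  assumes "\<forall>k. (\<lambda>i. W i k) \<longlonglongrightarrow> W0 k" "x \<longlonglongrightarrow> x0"
  shows "(\<lambda>i. costj (W i) b k (x i) j) \<longlonglongrightarrow> costj W0 b k x0 j"
  unfolding costj_def using assms by (intro tendsto_intros tendsto_mv) auto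

lemma costj_P: "P j *v x' = P j *v x \<Longrightarrow> costj W b k x' j = costj W b k x j"
  by (simp add: costj_def)

lemma accum_props:
  assumes ap: "is_accum_point Wt Bt \<Gamma>t xt W B \<Gamma> x"
  shows "(\<forall>k. unitary_mat (W k)) \<and> norm x \<le> C \<and> hr W B \<Gamma> x = hstar
   \<and> (\<forall>z. norm z \<le> C \<longrightarrow> fit W B \<Gamma> x \<le> fit W B \<Gamma> z)
   \<and> (\<forall>W'. (\<forall>k. unitary_mat (W' k)) \<longrightarrow> fit W B \<Gamma> x \<le> fit W' B \<Gamma> x)
   \<and> (\<forall>B' \<Gamma>'. hr W B \<Gamma> x \<le> hr W B' \<Gamma>' x)
   \<and> (\<forall>j i. (B j $ i \<noteq> 0 \<longrightarrow> B j $ i = (W (\<Gamma> j) *v (P j *v x)) $ i \<and> \<eta> \<le> norm (B j $ i))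
                 \<and> (B j $ i = 0 \<longrightarrow> norm ((W (\<Gamma> j) *v (P j *v x)) $ i) \<le> \<eta>))"
proof -
  obtain r :: "nat \<Rightarrow> nat" where sm: "strict_mono r" and rW: "\<forall>k. (\<lambda>i. Wt (r i) k) \<longlonglongrightarrow> W k"
    and rB: "\<forall>j. (\<lambda>i. Bt (r i) j) \<longlonglongrightarrow> B j" and rG: "\<forall>i. \<Gamma>t (r i) = \<Gamma>"
    and rx: "(\<lambda>i. xt (r i)) \<longlonglongrightarrow> x" and r2: "\<forall>i. 2 \<le> r i"
    using accum_norm[OF ap] by blast
  have rS: "Suc (r i - 1) = r i" for i using r2[rule_format, of i] by simp
  have r1: "1 \<le> r i" for i using r2[rule_format, of i] by simp
  have uW: "\<forall>k. unitary_mat (W k)"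
  proof
    fix k
    show "unitary_mat (W k)"
      by (rule unitary_limit[OF rW[rule_format, of k]]) (use unit_t'[OF r1] in \<open>auto intro!: always_eventually\<close>)
  qed
  have xC: "norm x \<le> C"
    by (rule tendsto_upperbound[OF tendsto_norm[OF rx]]) (use xn_t'[OF r1] in \<open>auto intro!: always_eventually\<close>)
  have entr: "\<forall>\<^sub>F i in sequentially. \<forall>j l. Bt (r i) j $ l = 0 \<or> \<eta> \<le> norm (Bt (r i) j $ l)"
    by (rule always_eventually) (use ent_t'[OF r1] in auto)
  have hval: "hr W B \<Gamma> x = hstar"
  proof -
    have "(\<lambda>i. H (r i)) \<longlonglongrightarrow> hstar" using LIMSEQ_subseq_LIMSEQ[OF H_lim sm] by (simp add: o_def)
    moreover have "(\<lambda>i. H (r i)) \<longlonglongrightarrow> hr W B \<Gamma> x"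
      unfolding H_def rG[rule_format] by (rule hr_tendsto[OF rW rB rx entr])
    ultimately show ?thesis using LIMSEQ_unique by blast
  qed
  have xmin: "\<forall>z. norm z \<le> C \<longrightarrow> fit W B \<Gamma> x \<le> fit W B \<Gamma> z"
  proof (intro allI impI)
    fix z :: "complex^'p" assume zC: "norm z \<le> C"
    have le: "fit (Wt (r i)) (Bt (r i)) \<Gamma> (xt (r i)) \<le> fit (Wt (r i)) (Bt (r i)) \<Gamma> z" for i
      using xmin_t[OF zC, of "r i - 1"] rS[of i] rG by simp
    show "fit W B \<Gamma> x \<le> fit W B \<Gamma> z"
      by (rule LIMSEQ_le[OF fit_tendsto[OF rW rB rx] fit_tendsto[OF rW rB tendsto_const]]) (use le in auto)
  qed
  \<comment> \<open>W-minimality via the shifted subsequence\<close>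
  have wmin: "\<forall>W'. (\<forall>k. unitary_mat (W' k)) \<longrightarrow> fit W B \<Gamma> x \<le> fit W' B \<Gamma> x"
  proof -
    obtain cW where cW: "\<forall>t k. norm (Wt t k) \<le> cW" using Wbound by blast
    obtain q :: "nat \<Rightarrow> nat" and W2 where q: "strict_mono q" "\<forall>k. (\<lambda>i. Wt (Suc (r (q i))) k) \<longlonglongrightarrow> W2 k"
      using compact_fun[of "\<lambda>i. Wt (Suc (r i))" cW] cW by blast
    have qB: "\<forall>j. (\<lambda>i. Bt (r (q i)) j) \<longlonglongrightarrow> B j"
      using LIMSEQ_subseq_LIMSEQ[OF rB[rule_format] q(1)] by (simp add: o_def)
    have qx: "(\<lambda>i. xt (r (q i))) \<longlonglongrightarrow> x"
      using LIMSEQ_subseq_LIMSEQ[OF rx q(1)] by (simp add: o_def)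
    have entq: "\<forall>\<^sub>F i in sequentially. \<forall>j l. Bt (r (q i)) j $ l = 0 \<or> \<eta> \<le> norm (Bt (r (q i)) j $ l)"
      by (rule always_eventually) (use ent_t'[OF r1] in auto)
    have smq: "strict_mono (r \<circ> q)" using sm q(1) by (rule strict_mono_o)
    have "(\<lambda>i. M1 (r (q i))) \<longlonglongrightarrow> hstar" using LIMSEQ_subseq_LIMSEQ[OF M1_lim smq] by (simp add: o_def)
    moreover have "(\<lambda>i. M1 (r (q i))) \<longlonglongrightarrow> hr W2 B \<Gamma> x"
      unfolding M1_def rG[rule_format] by (rule hr_tendsto[OF q(2) qB qx entq])
    ultimately have h2: "hr W2 B \<Gamma> x = hstar" using LIMSEQ_unique by blast
    then have f2: "fit W2 B \<Gamma> x = fit W B \<Gamma> x" using hval by (simp add: hr_def)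
    show ?thesis
    proof (intro allI impI)
      fix W' :: "'k \<Rightarrow> complex^'n^'n" assume uW': "\<forall>k. unitary_mat (W' k)"
      have le: "fit (Wt (Suc (r (q i)))) (Bt (r (q i))) \<Gamma> (xt (r (q i))) \<le> fit W' (Bt (r (q i))) \<Gamma> (xt (r (q i)))" for i
        using wopt_t[OF uW', of "r (q i)"] rG by simp
      have "fit W2 B \<Gamma> x \<le> fit W' B \<Gamma> x"
        by (rule LIMSEQ_le[OF fit_tendsto[OF q(2) qB qx] fit_tendsto[OF _ qB qx]]) (use le in auto)
      then show "fit W B \<Gamma> x \<le> fit W' B \<Gamma> x" using f2 by simp
    qed
  qed
  obtain cx where cx: "\<forall>t. norm (xt t) \<le> cx" using xbound by blast
  obtain q :: "nat \<Rightarrow> nat" and x' where q: "strict_mono q" "(\<lambda>i. xt (r (q i) - 1)) \<longlonglongrightarrow> x'"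
    using compact_single[of "\<lambda>i. xt (r i - 1)" cx] cx by blast
  define \<rho> where "\<rho> i = r (q i)" for i
  define \<sigma> where "\<sigma> i = \<rho> i - 1" for i
  have smr: "strict_mono \<rho>" unfolding \<rho>_def using strict_mono_o[OF sm q(1)] by (simp add: o_def)
  have \<rho>2: "2 \<le> \<rho> i" for i using r2 by (simp add: \<rho>_def)
  have \<rho>1: "1 \<le> \<rho> i" for i using \<rho>2[of i] by simp
  have \<sigma>1: "1 \<le> \<sigma> i" for i using \<rho>2[of i] by (simp add: \<sigma>_def)
  have S\<sigma>: "Suc (\<sigma> i) = \<rho> i" for i using \<rho>2[of i] by (simp add: \<sigma>_def)
  have sms: "strict_mono \<sigma>"
  proof (rule strict_monoI)
    fix a b :: nat assume "a < b"
    then have "\<rho> a < \<rho> b" using smr by (simp add: strict_mono_def)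
    then show "\<sigma> a < \<sigma> b" using \<rho>2[of a] by (simp add: \<sigma>_def)
  qed
  have pW: "\<forall>k. (\<lambda>i. Wt (\<rho> i) k) \<longlonglongrightarrow> W k"
    using LIMSEQ_subseq_LIMSEQ[OF rW[rule_format] q(1)] by (simp add: o_def \<rho>_def)
  have pB: "\<forall>j. (\<lambda>i. Bt (\<rho> i) j) \<longlonglongrightarrow> B j"
    using LIMSEQ_subseq_LIMSEQ[OF rB[rule_format] q(1)] by (simp add: o_def \<rho>_def)
  have px: "(\<lambda>i. xt (\<sigma> i)) \<longlonglongrightarrow> x'" using q(2) by (simp add: \<sigma>_def \<rho>_def)
  have pG: "\<Gamma>t (\<rho> i) = \<Gamma>" for i using rG by (simp add: \<rho>_def)
  have entp: "\<forall>\<^sub>F i in sequentially. \<forall>j l. Bt (\<rho> i) j $ l = 0 \<or> \<eta> \<le> norm (Bt (\<rho> i) j $ l)"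
    by (rule always_eventually) (use ent_t'[OF \<rho>1] in auto)
  have x'C: "norm x' \<le> C"
    by (rule tendsto_upperbound[OF tendsto_norm[OF px]])
       (use xn_t'[OF \<sigma>1] in \<open>auto intro!: always_eventually\<close>)
  have "(\<lambda>i. M2 (\<sigma> i)) \<longlonglongrightarrow> hstar" using LIMSEQ_subseq_LIMSEQ[OF M2_lim sms] by (simp add: o_def)
  moreover have "(\<lambda>i. M2 (\<sigma> i)) \<longlonglongrightarrow> hr W B \<Gamma> x'"
    unfolding M2_def S\<sigma> pG by (rule hr_tendsto[OF pW pB px entp])
  ultimately have "hr W B \<Gamma> x' = hstar" using LIMSEQ_unique by blast
  then have "fit W B \<Gamma> x' = fit W B \<Gamma> x" using hval by (simp add: hr_def)
  then have Pe: "P j *v x' = P j *v x" for j using pmatch[OF uW xmin xC x'C] by blast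
  have bmin: "\<forall>B' \<Gamma>'. hr W B \<Gamma> x \<le> hr W B' \<Gamma>' x"
  proof (intro allI)
    fix B' :: "'j \<Rightarrow> complex^'n" and \<Gamma>' :: "'j \<Rightarrow> 'k"
    have cj: "costj W (B j) (\<Gamma> j) x j \<le> costj W (B' j) (\<Gamma>' j) x j" for j
    proof -
      have le: "costj (Wt (\<rho> i)) (Bt (\<rho> i) j) (\<Gamma> j) (xt (\<sigma> i)) j \<le> costj (Wt (\<rho> i)) (B' j) (\<Gamma>' j) (xt (\<sigma> i)) j" for i
        using scopt_t[of "\<sigma> i" j "B' j" "\<Gamma>' j"] S\<sigma>[of i] pG[of i] by simp
      have entj: "\<forall>\<^sub>F i in sequentially. \<forall>l. Bt (\<rho> i) j $ l = 0 \<or> \<eta> \<le> norm (Bt (\<rho> i) j $ l)"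
        by (rule eventually_mono[OF entp]) blast
      have "costj W (B j) (\<Gamma> j) x' j \<le> costj W (B' j) (\<Gamma>' j) x' j"
        by (rule LIMSEQ_le[OF costj_tendsto[OF pW pB[rule_format, of j] px entj] costj_tendsto_const[OF pW px]])
           (use le in auto)
      then show ?thesis using costj_P[OF Pe[of j]] by simp
    qed
    show "hr W B \<Gamma> x \<le> hr W B' \<Gamma>' x" unfolding hr_costj by (simp add: sum_mono cj)
  qed
  have ent: "\<forall>j i. (B j $ i \<noteq> 0 \<longrightarrow> B j $ i = (W (\<Gamma> j) *v (P j *v x)) $ i \<and> \<eta> \<le> norm (B j $ i))
                 \<and> (B j $ i = 0 \<longrightarrow> norm ((W (\<Gamma> j) *v (P j *v x)) $ i) \<le> \<eta>)"
  proof (intro allI)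
    fix j i
    have zl: "(\<lambda>n. Wt (\<rho> n) (\<Gamma> j) *v (P j *v xt (\<sigma> n))) \<longlonglongrightarrow> W (\<Gamma> j) *v (P j *v x')"
      using pW px by (intro tendsto_mv tendsto_const) auto
    have "(\<lambda>n. hard_thr \<eta> (Wt (\<rho> n) (\<Gamma> j) *v (P j *v xt (\<sigma> n)))) \<longlonglongrightarrow> B j"
    proof -
      have eqB: "Bt (\<rho> n) j = hard_thr \<eta> (Wt (\<rho> n) (\<Gamma> j) *v (P j *v xt (\<sigma> n)))" for n
        using Bdef_t[of "\<sigma> n" j] S\<sigma>[of n] pG[of n] by simp
      show ?thesis unfolding eqB[symmetric] using pB by blast
    qed
    from thr_limit[OF zl this pos(2), of i] show "(B j $ i \<noteq> 0 \<longrightarrow> B j $ i = (W (\<Gamma> j) *v (P j *v x)) $ i \<and> \<eta> \<le> norm (B j $ i))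
                 \<and> (B j $ i = 0 \<longrightarrow> norm ((W (\<Gamma> j) *v (P j *v x)) $ i) \<le> \<eta>)"
      using Pe[of j] by simp
  qed
  show ?thesis using uW xC hval xmin wmin bmin ent by blast
qed

end


theorem corollary3:
  fixes A :: "complex^'p^'m" and y :: "complex^'m"
    and P :: "'j::finite \<Rightarrow> complex^'p^'n"
    and \<nu> \<eta> C :: real
    and Wt :: "nat \<Rightarrow> 'k::{finite,linorder} \<Rightarrow> complex^'n^'n"
    and Bt :: "nat \<Rightarrow> 'j \<Rightarrow> complex^'n"
    and \<Gamma>t :: "nat \<Rightarrow> 'j \<Rightarrow> 'k"
    and xt :: "nat \<Rightarrow> complex^'p"
  assumes P01: "\<forall>j a b. P j $ a $ b = 0 \<or> P j $ a $ b = 1"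
    and pos: "\<nu> > 0" "\<eta> > 0" "C > 0"
    and iter: "A2_iterates A y P \<nu> \<eta> C Wt Bt \<Gamma>t xt"
  defines "h \<equiv> hobj A y P \<nu> \<eta> C"
  shows
    \<comment> \<open>accumulation points exist\<close>
    "(\<exists>W B \<Gamma> x. is_accum_point Wt Bt \<Gamma>t xt W B \<Gamma> x)
    \<comment> \<open>they form an equivalence class: all have the same objective value\<close>
   \<and> (\<exists>hs. \<forall>W B \<Gamma> x. is_accum_point Wt Bt \<Gamma>t xt W B \<Gamma> x \<longrightarrow> h W B \<Gamma> x = hs)
    \<comment> \<open>the iterates converge to this set of accumulation points\<close>
   \<and> (\<forall>\<epsilon>>0. \<exists>T. \<forall>t\<ge>T. \<exists>W B \<Gamma> x. is_accum_point Wt Bt \<Gamma>t xt W B \<Gamma> x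
                          \<and> iter_close \<epsilon> (Wt t) (Bt t) (\<Gamma>t t) (xt t) W B \<Gamma> x)
    \<comment> \<open>every accumulation point is a partial minimizer\<close>
   \<and> (\<forall>W B \<Gamma> x. is_accum_point Wt Bt \<Gamma>t xt W B \<Gamma> x \<longrightarrow>
        (\<forall>x'. h W B \<Gamma> x \<le> h W B \<Gamma> x')
      \<and> (\<forall>W'. h W B \<Gamma> x \<le> h W' B \<Gamma> x)
      \<and> (\<forall>B' \<Gamma>'. h W B \<Gamma> x \<le> h W B' \<Gamma>' x)
      \<and> (\<forall>dB dx. (\<forall>j i. norm (dB j $ i) < \<eta> / 2) \<longrightarrow>
                  h W B \<Gamma> x \<le> h W (\<lambda>j. B j + dB j) \<Gamma> (x + dx)))"
proof -
  interpret L: A2loc A y P \<nu> \<eta> C Wt Bt \<Gamma>t xt using pos iter by unfold_locales auto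
  have accI: "is_accum_point Wt Bt \<Gamma>t xt W B \<Gamma> x"
    if "strict_mono (r::nat\<Rightarrow>nat)" "\<forall>k. (\<lambda>i. Wt (r i) k) \<longlonglongrightarrow> W k" "\<forall>j. (\<lambda>i. Bt (r i) j) \<longlonglongrightarrow> B j"
       "\<forall>i. \<Gamma>t (r i) = \<Gamma>" "(\<lambda>i. xt (r i)) \<longlonglongrightarrow> x" for r W B \<Gamma> x
    unfolding is_accum_point_def using that by (intro exI[of _ r]) (auto intro: always_eventually)
  have C1: "\<exists>W B \<Gamma> x. is_accum_point Wt Bt \<Gamma>t xt W B \<Gamma> x"
  proof -
    obtain r :: "nat \<Rightarrow> nat" and W B \<Gamma> x where "strict_mono r" "\<forall>k. (\<lambda>i. Wt (id (r i)) k) \<longlonglongrightarrow> W k"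
      "\<forall>j. (\<lambda>i. Bt (id (r i)) j) \<longlonglongrightarrow> B j" "\<forall>i. \<Gamma>t (id (r i)) = \<Gamma>" "(\<lambda>i. xt (id (r i))) \<longlonglongrightarrow> x"
      using L.subseq_conv[of id] strict_mono_id by blast
    then have "is_accum_point Wt Bt \<Gamma>t xt W B \<Gamma> x" by (intro accI) auto
    then show ?thesis by blast
  qed
  have hval: "h W B \<Gamma> x = ereal L.hstar" if "is_accum_point Wt Bt \<Gamma>t xt W B \<Gamma> x" for W B \<Gamma> x
    using L.accum_props[OF that] unfolding h_def L.hobj_eq by simp
  have C2: "\<exists>hs. \<forall>W B \<Gamma> x. is_accum_point Wt Bt \<Gamma>t xt W B \<Gamma> x \<longrightarrow> h W B \<Gamma> x = hs"
    using hval by blast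
  have C3: "\<forall>\<epsilon>>0. \<exists>T. \<forall>t\<ge>T. \<exists>W B \<Gamma> x. is_accum_point Wt Bt \<Gamma>t xt W B \<Gamma> x
                          \<and> iter_close \<epsilon> (Wt t) (Bt t) (\<Gamma>t t) (xt t) W B \<Gamma> x"
  proof (rule ccontr)
    assume "\<not> ?thesis"
    then obtain \<epsilon> :: real where e: "\<epsilon> > 0" and nT: "\<forall>T. \<exists>t\<ge>T. \<not> (\<exists>W B \<Gamma> x. is_accum_point Wt Bt \<Gamma>t xt W B \<Gamma> x
                          \<and> iter_close \<epsilon> (Wt t) (Bt t) (\<Gamma>t t) (xt t) W B \<Gamma> x)" by blast
    define S where "S = {t. \<not> (\<exists>W B \<Gamma> x. is_accum_point Wt Bt \<Gamma>t xt W B \<Gamma> x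
                          \<and> iter_close \<epsilon> (Wt t) (Bt t) (\<Gamma>t t) (xt t) W B \<Gamma> x)}"
    have "infinite S" unfolding infinite_nat_iff_unbounded_le S_def using nT by blast
    then obtain s :: "nat \<Rightarrow> nat" where s: "strict_mono s" "\<forall>n. s n \<in> S" using infinite_enumerate by blast
    obtain r :: "nat \<Rightarrow> nat" and W B \<Gamma> x where r: "strict_mono r" "\<forall>k. (\<lambda>i. Wt (s (r i)) k) \<longlonglongrightarrow> W k"
      "\<forall>j. (\<lambda>i. Bt (s (r i)) j) \<longlonglongrightarrow> B j" "\<forall>i. \<Gamma>t (s (r i)) = \<Gamma>" "(\<lambda>i. xt (s (r i))) \<longlonglongrightarrow> x"
      using L.subseq_conv[OF s(1)] by blast
    have acc: "is_accum_point Wt Bt \<Gamma>t xt W B \<Gamma> x"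
      by (rule accI[of "s \<circ> r"]) (use r s(1) strict_mono_o in auto)
    have ev1: "\<forall>\<^sub>F i in sequentially. \<forall>k. dist (Wt (s (r i)) k) (W k) < \<epsilon>"
      by (rule eventually_all_finite) (rule tendstoD[OF r(2)[rule_format] e])
    have ev2: "\<forall>\<^sub>F i in sequentially. \<forall>j. dist (Bt (s (r i)) j) (B j) < \<epsilon>"
      by (rule eventually_all_finite) (rule tendstoD[OF r(3)[rule_format] e])
    have ev3: "\<forall>\<^sub>F i in sequentially. dist (xt (s (r i))) x < \<epsilon>"
      by (rule tendstoD[OF r(5) e])
    have "\<forall>\<^sub>F i in sequentially. iter_close \<epsilon> (Wt (s (r i))) (Bt (s (r i))) (\<Gamma>t (s (r i))) (xt (s (r i))) W B \<Gamma> x"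
      using ev1 ev2 ev3 by eventually_elim (use r(4) in \<open>simp add: iter_close_def\<close>)
    then obtain N where N: "\<forall>i\<ge>N. iter_close \<epsilon> (Wt (s (r i))) (Bt (s (r i))) (\<Gamma>t (s (r i))) (xt (s (r i))) W B \<Gamma> x"
      unfolding eventually_sequentially by blast
    have cl: "iter_close \<epsilon> (Wt (s (r N))) (Bt (s (r N))) (\<Gamma>t (s (r N))) (xt (s (r N))) W B \<Gamma> x"
      using N by blast
    have "s (r N) \<in> S" using s(2) by blast
    then have "\<not> (is_accum_point Wt Bt \<Gamma>t xt W B \<Gamma> x
         \<and> iter_close \<epsilon> (Wt (s (r N))) (Bt (s (r N))) (\<Gamma>t (s (r N))) (xt (s (r N))) W B \<Gamma> x)"
      unfolding S_def by blast
    with acc cl show False by blast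
  qed
  have C4: "\<forall>W B \<Gamma> x. is_accum_point Wt Bt \<Gamma>t xt W B \<Gamma> x \<longrightarrow>
        (\<forall>x'. h W B \<Gamma> x \<le> h W B \<Gamma> x')
      \<and> (\<forall>W'. h W B \<Gamma> x \<le> h W' B \<Gamma> x)
      \<and> (\<forall>B' \<Gamma>'. h W B \<Gamma> x \<le> h W B' \<Gamma>' x)
      \<and> (\<forall>dB dx. (\<forall>j i. norm (dB j $ i) < \<eta> / 2) \<longrightarrow>
                  h W B \<Gamma> x \<le> h W (\<lambda>j. B j + dB j) \<Gamma> (x + dx))"
  proof (intro allI impI conjI)
    fix W B \<Gamma> x assume ap: "is_accum_point Wt Bt \<Gamma>t xt W B \<Gamma> x"
    note pr = L.accum_props[OF ap]
    have uW: "\<forall>k. unitary_mat (W k)" and xC: "norm x \<le> C"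
      and xmin: "\<forall>z. norm z \<le> C \<longrightarrow> L.fit W B \<Gamma> x \<le> L.fit W B \<Gamma> z"
      and wmin: "\<forall>W'. (\<forall>k. unitary_mat (W' k)) \<longrightarrow> L.fit W B \<Gamma> x \<le> L.fit W' B \<Gamma> x"
      and bmin: "\<forall>B' \<Gamma>'. L.hr W B \<Gamma> x \<le> L.hr W B' \<Gamma>' x"
      and ent: "\<forall>j i. (B j $ i \<noteq> 0 \<longrightarrow> B j $ i = (W (\<Gamma> j) *v (P j *v x)) $ i \<and> \<eta> \<le> norm (B j $ i))
                 \<and> (B j $ i = 0 \<longrightarrow> norm ((W (\<Gamma> j) *v (P j *v x)) $ i) \<le> \<eta>)"
      using pr by blast+
    show "h W B \<Gamma> x \<le> h W B \<Gamma> x'" for x'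
      unfolding h_def L.hobj_eq using uW xC xmin by (auto simp: L.hr_def)
    show "h W B \<Gamma> x \<le> h W' B \<Gamma> x" for W'
      unfolding h_def L.hobj_eq using uW xC wmin by (auto simp: L.hr_def)
    show "h W B \<Gamma> x \<le> h W B' \<Gamma>' x" for B' \<Gamma>'
      unfolding h_def L.hobj_eq using uW xC bmin by auto
    show "h W B \<Gamma> x \<le> h W (\<lambda>j. B j + dB j) \<Gamma> (x + dx)" if "\<forall>j i. norm (dB j $ i) < \<eta> / 2" for dB dx
      unfolding h_def by (rule L.perturb[OF uW xmin xC ent that])
  qed
  show ?thesis using C1 C2 C3 C4 by blast
qed

end
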